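(* Let $q\in(1,+\infty)$, $T>0$ and $p=q/(q-1)$. For $(t,x,v)\in[0,T]\times[-1,1]\times\mathbb R$ let $$\tilde\phi(t,x,v)=\inf\frac1q\int_t^T|\xi''(s)|^q\,ds,$$ where the infimum is taken over all $\xi\in W^{2,q}(t,T)$ such that $\xi(t)=x$, $\xi'(t)=v$ and $\xi(s)\in[-1,1]$ for all $s\in[t,T]$. Then $$\tilde\phi(t,x,v)=\begin{cases} \frac{q^{q-1}}{(2q-1)^q}\frac{|v|^{2q-1}}{(1+x)^{q-1}}, & \text{if } v(T-t)\le -\frac{2q-1}{q-1}(1+x)<0,\\[2mm] \frac1q\frac{(2q-1)^{q-1}}{(q-1)^{q-1}}\frac{\left|v+\frac{1+x}{T-t}\right|^q}{(T-t)^{q-1}}, & \text{if } -\frac{2q-1}{q-1}(1+x)\le v(T-t)\le -(1+x),\\[2mm] 0, & \text{if } -1-x\le v(T-t)\le 1-x,\\[2mm] \frac1q\frac{(2q-1)^{q-1}}{(q-1)^{q-1}}\frac{\left(v+\frac{x-1}{T-t}\right)^q}{(T-t)^{q-1}}, & \text{if } 1-x\le v(T-t)\le\frac{2q-1}{q-1}(1-x),\\[2mm] \frac{q^{q-1}}{(2q-1)^q}\frac{v^{2q-1}}{(1-x)^{q-1}}, & \text{if } v(T-t)\ge\frac{2q-1}{q-1}(1-x)>0, \end{cases}$$ and $\tilde\phi$ is $C^1$ in $[0,T]\times(-1,1)\times\mathbb R$. Moreover, the restrictions of $\tilde\phi$ to $[0,T)\times[-1,1)\times[0,+\infty)$ and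 to $[0,T)\times(-1,1]\times(-\infty,0]$ are pointwise solutions of $$-\frac{\partial\tilde\phi}{\partial t}-v\frac{\partial\tilde\phi}{\partial x}+\frac1p\left|\frac{\partial\tilde\phi}{\partial v}\right|^p=0.$$ *)

theory Defs
  imports "HOL-Analysis.Analysis"
begin

text \<open>One-dimensional Sobolev space W^{2,q}(t,T): xi is differentiable on [t,T] with
  derivative xi', and xi' is absolutely continuous with (weak) derivative g in L^q(t,T),
  i.e. xi'(s) = xi'(t) + integral of g over [t,s].\<close>
definition W2q :: "real \<Rightarrow> real \<Rightarrow> real \<Rightarrow> (real \<Rightarrow> real) \<Rightarrow> (real \<Rightarrow> real) \<Rightarrow> (real \<Rightarrow> real) \<Rightarrow> bool" where
  "W2q q t T xi xi' g \<longleftrightarrow>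
     (\<forall>s\<in>{t..T}. (xi has_real_derivative xi' s) (at s within {t..T})) \<and>
     g absolutely_integrable_on {t..T} \<and>
     (\<lambda>s. \<bar>g s\<bar> powr q) integrable_on {t..T} \<and>
     (\<forall>s\<in>{t..T}. xi' s = xi' t + integral {t..s} g)"

definition admissible :: "real \<Rightarrow> real \<Rightarrow> real \<Rightarrow> real \<Rightarrow> real \<Rightarrow> (real \<Rightarrow> real) \<Rightarrow> (real \<Rightarrow> real) \<Rightarrow> (real \<Rightarrow> real) \<Rightarrow> bool" where
  "admissible q T t x v xi xi' g \<longleftrightarrow>
     W2q q t T xi xi' g \<and> xi t = x \<and> xi' t = v \<and> (\<forall>s\<in>{t..T}. xi s \<in> {-1..1})"

text \<open>Value function (infimum in the extended reals; +infinity if no admissible curve).\<close>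
definition phi_tilde :: "real \<Rightarrow> real \<Rightarrow> real \<Rightarrow> real \<Rightarrow> real \<Rightarrow> ereal" where
  "phi_tilde q T t x v =
     (INF c \<in> {(xi, xi', g). admissible q T t x v xi xi' g}.
        ereal ((1/q) * integral {t..T} (\<lambda>s. \<bar>(snd (snd c)) s\<bar> powr q)))"

end

theory Submission
  imports Defs
begin

lemma pp_deriv:
  fixes e y :: real
  assumes e: "e > 1"
  shows "((\<lambda>y. (max y 0) powr e) has_real_derivative e * (max y 0) powr (e-1)) (at y)"
proof -
  consider "y > 0" | "y < 0" | "y = 0" by linarith
  then show ?thesis
  proof cases
    case 1
    have ev: "eventually (\<lambda>z. (max z 0) powr e = z powr e) (nhds y)"
      using eventually_nhds_in_open[of "{0<..}" y] 1
      by (auto elim!: eventually_mono)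
    have "((\<lambda>z. z powr e) has_real_derivative e * y powr (e-1)) (at y)"
      using 1 by (auto intro!: derivative_eq_intros)
    then show ?thesis
      using 1 by (subst DERIV_cong_ev[OF refl ev refl]) simp
  next
    case 2
    have ev: "eventually (\<lambda>z. (max z 0) powr e = 0) (nhds y)"
      using eventually_nhds_in_open[of "{..<0}" y] 2
      by (auto elim!: eventually_mono)
    show ?thesis
      using 2 by (subst DERIV_cong_ev[OF refl ev refl]) auto
  next
    case 3
    have "((\<lambda>z. ((max z 0) powr e - (max 0 0) powr e) / (z - 0)) \<longlongrightarrow> 0) (at 0)"
    proof (rule Lim_null_comparison)
      show "eventually (\<lambda>z. norm (((max z 0) powr e - (max 0 0) powr e) / (z - 0)) \<le> \<bar>z\<bar> powr (e-1)) (at 0)"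
      proof (rule always_eventually, intro allI)
        fix z :: real
        show "norm (((max z 0) powr e - (max 0 0) powr e) / (z - 0)) \<le> \<bar>z\<bar> powr (e-1)"
        proof (cases "z > 0")
          case True
          then show ?thesis by (simp add: powr_diff)
        next
          case False
          then show ?thesis by (simp add: max_def)
        qed
      qed
      show "((\<lambda>z. \<bar>z\<bar> powr (e-1)) \<longlongrightarrow> 0) (at (0::real))"
        by (rule tendsto_zero_powrI) (auto intro!: tendsto_eq_intros simp: e)
    qed
    then show ?thesis using 3 e
      by (simp add: has_field_derivative_iff)
  qed
qed

lemma pp_deriv_chain:
  fixes e :: real
  assumes e: "e > 1" and f: "(f has_real_derivative f') (at y within S)"
  shows "((\<lambda>y. (max (f y) 0) powr e) has_real_derivative e * (max (f y) 0) powr (e-1) * f') (at y within S)"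
  using DERIV_chain2[OF pp_deriv[OF e] f] by simp


lemma abs_int_weight:
  fixes g :: "real \<Rightarrow> real"
  assumes g: "g absolutely_integrable_on {a..b}" and cont: "continuous_on {a..b} w"
  shows "(\<lambda>r. w r * g r) absolutely_integrable_on {a..b}"
proof (rule absolutely_integrable_bounded_measurable_product_real)
  show "w \<in> borel_measurable (lebesgue_on {a..b})"
    by (rule continuous_imp_measurable_on_sets_lebesgue[OF cont]) auto
  show "bounded (w ` {a..b})"
    by (rule compact_imp_bounded[OF compact_continuous_image[OF cont]]) auto
qed (use g in auto)

lemma taylor_W2q:
  fixes g xi xi' :: "real \<Rightarrow> real"
  assumes W: "W2q q t T xi xi' g" and s: "t \<le> \<sigma>" "\<sigma> \<le> T"
  shows "xi \<sigma> = xi t + xi' t * (\<sigma> - t) + integral {t..\<sigma>} (\<lambda>r. (\<sigma> - r) * g r)"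
proof -
  have der: "\<And>s. s \<in> {t..T} \<Longrightarrow> (xi has_real_derivative xi' s) (at s within {t..T})"
    and gabs: "g absolutely_integrable_on {t..T}"
    and xi': "\<And>s. s \<in> {t..T} \<Longrightarrow> xi' s = xi' t + integral {t..s} g"
    using W unfolding W2q_def by blast+
  have gint: "g integrable_on {t..T}" using gabs by (rule absolutely_integrable_on_def[THEN iffD1, THEN conjunct1])
  have agint: "(\<lambda>r. \<bar>g r\<bar>) integrable_on {t..T}"
    using gabs by (simp add: absolutely_integrable_on_def)
  define G where "G y = integral {t..y} g" for y
  define A where "A y = integral {t..y} (\<lambda>r. \<bar>g r\<bar>)" for y
  define R where "R y = integral {t..y} (\<lambda>r. (y - r) * g r)" for y
  define L where "L y = xi y - xi t - xi' t * (y - t)" for y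
  have Gc: "continuous_on {t..T} G" unfolding G_def
    by (rule indefinite_integral_continuous_1[OF gint])
  have Ac: "continuous_on {t..T} A" unfolding A_def
    by (rule indefinite_integral_continuous_1[OF agint])
  have wint: "(\<lambda>r. (c - r) * g r) integrable_on {a..b}" if "{a..b} \<subseteq> {t..T}" for a b c :: real
  proof -
    have "g absolutely_integrable_on {a..b}"
      using gabs that by (meson absolutely_integrable_on_subinterval)
    then have "(\<lambda>r. (c - r) * g r) absolutely_integrable_on {a..b}"
      by (intro abs_int_weight) (auto intro!: continuous_intros)
    then show ?thesis by (simp add: absolutely_integrable_on_def)
  qed
  have gsub: "g integrable_on {a..b}" if "{a..b} \<subseteq> {t..T}" for a b
    using integrable_subinterval_real[OF gint that] .
  have agsub: "(\<lambda>r. \<bar>g r\<bar>) integrable_on {a..b}" if "{a..b} \<subseteq> {t..T}" for a b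
    using integrable_subinterval_real[OF agint that] .
  have est: "\<bar>R y - R y0 - (y - y0) * G y0\<bar> \<le> \<bar>y - y0\<bar> * (\<bar>G y - G y0\<bar> + \<bar>A y - A y0\<bar>)"
    if y: "y \<in> {t..T}" and y0: "y0 \<in> {t..T}" for y y0
  proof -
    define K where "K z = integral {t..z} (\<lambda>r. (y0 - r) * g r)" for z
    have R1: "R z = K z + (z - y0) * G z" if "z \<in> {t..T}" for z
    proof -
      have "R z = integral {t..z} (\<lambda>r. (y0 - r) * g r + (z - y0) * g r)"
        unfolding R_def by (rule integral_cong) (simp add: algebra_simps)
      also have "\<dots> = K z + (z - y0) * G z"
      proof -
        have sub: "{t..z} \<subseteq> {t..T}" using that by auto
        show ?thesis
          using integral_add[OF wint[OF sub, of y0] integrable_on_mult_right[OF gsub[OF sub], of "z - y0"]]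
          by (simp add: integral_mult_right K_def G_def)
      qed
      finally show ?thesis .
    qed
    have Kest: "\<bar>K y - K y0\<bar> \<le> \<bar>y - y0\<bar> * \<bar>A y - A y0\<bar>"
    proof (cases "y0 \<le> y")
      case True
      have "K y = K y0 + integral {y0..y} (\<lambda>r. (y0 - r) * g r)"
        unfolding K_def using True y y0
        using Henstock_Kurzweil_Integration.integral_combine[of t y0 y "\<lambda>r. (y0 - r) * g r"] True y y0 wint[of t y y0] by auto
      moreover have "A y = A y0 + integral {y0..y} (\<lambda>r. \<bar>g r\<bar>)"
        unfolding A_def using True y y0
        using Henstock_Kurzweil_Integration.integral_combine[of t y0 y "\<lambda>r. \<bar>g r\<bar>"] True y y0 agsub[of t y] by auto
      moreover have "\<bar>integral {y0..y} (\<lambda>r. (y0 - r) * g r)\<bar> \<le> integral {y0..y} (\<lambda>r. (y - y0) * \<bar>g r\<bar>)"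
      proof -
        have sub: "{y0..y} \<subseteq> {t..T}" using y y0 by auto
        have "norm (integral {y0..y} (\<lambda>r. (y0 - r) * g r)) \<le> integral {y0..y} (\<lambda>r. (y - y0) * \<bar>g r\<bar>)"
        proof (rule integral_norm_bound_integral)
          show "(\<lambda>r. (y0 - r) * g r) integrable_on {y0..y}" using wint[OF sub] .
          show "(\<lambda>r. (y - y0) * \<bar>g r\<bar>) integrable_on {y0..y}" using integrable_on_mult_right[OF agsub[OF sub]] .
          fix r assume "r \<in> {y0..y}"
          then show "norm ((y0 - r) * g r) \<le> (y - y0) * \<bar>g r\<bar>"
            by (simp add: abs_mult mult_right_mono)
        qed
        then show ?thesis by simp
      qed
      moreover have "integral {y0..y} (\<lambda>r. (y - y0) * \<bar>g r\<bar>) = (y - y0) * integral {y0..y} (\<lambda>r. \<bar>g r\<bar>)"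
        by (simp add: integral_mult_right)
      moreover have "integral {y0..y} (\<lambda>r. \<bar>g r\<bar>) \<ge> 0"
        by (rule integral_nonneg) (use y y0 True in \<open>auto intro!: agsub\<close>)
      ultimately show ?thesis using True by (simp add: abs_mult)
    next
      case False
      have "K y0 = K y + integral {y..y0} (\<lambda>r. (y0 - r) * g r)"
        unfolding K_def using False y y0
        using Henstock_Kurzweil_Integration.integral_combine[of t y y0 "\<lambda>r. (y0 - r) * g r"] False y y0 wint[of t y0 y0] by auto
      moreover have "A y0 = A y + integral {y..y0} (\<lambda>r. \<bar>g r\<bar>)"
        unfolding A_def using False y y0
        using Henstock_Kurzweil_Integration.integral_combine[of t y y0 "\<lambda>r. \<bar>g r\<bar>"] False y y0 agsub[of t y0] by auto
      moreover have "\<bar>integral {y..y0} (\<lambda>r. (y0 - r) * g r)\<bar> \<le> integral {y..y0} (\<lambda>r. (y0 - y) * \<bar>g r\<bar>)"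
      proof -
        have sub: "{y..y0} \<subseteq> {t..T}" using y y0 by auto
        have "norm (integral {y..y0} (\<lambda>r. (y0 - r) * g r)) \<le> integral {y..y0} (\<lambda>r. (y0 - y) * \<bar>g r\<bar>)"
        proof (rule integral_norm_bound_integral)
          show "(\<lambda>r. (y0 - r) * g r) integrable_on {y..y0}" using wint[OF sub] .
          show "(\<lambda>r. (y0 - y) * \<bar>g r\<bar>) integrable_on {y..y0}" using integrable_on_mult_right[OF agsub[OF sub]] .
          fix r assume "r \<in> {y..y0}"
          then show "norm ((y0 - r) * g r) \<le> (y0 - y) * \<bar>g r\<bar>"
            by (simp add: abs_mult mult_right_mono)
        qed
        then show ?thesis by simp
      qed
      moreover have "integral {y..y0} (\<lambda>r. (y0 - y) * \<bar>g r\<bar>) = (y0 - y) * integral {y..y0} (\<lambda>r. \<bar>g r\<bar>)"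
        by (simp add: integral_mult_right)
      moreover have "integral {y..y0} (\<lambda>r. \<bar>g r\<bar>) \<ge> 0"
        by (rule integral_nonneg) (use y y0 False in \<open>auto intro!: agsub\<close>)
      ultimately show ?thesis using False by (simp add: abs_mult)
    qed
    have "R y - R y0 - (y - y0) * G y0 = (K y - K y0) + (y - y0) * (G y - G y0)"
      using R1[OF y] R1[OF y0] by (simp add: algebra_simps)
    then have "\<bar>R y - R y0 - (y - y0) * G y0\<bar> \<le> \<bar>K y - K y0\<bar> + \<bar>y - y0\<bar> * \<bar>G y - G y0\<bar>"
    proof -
      have "\<bar>(K y - K y0) + (y - y0) * (G y - G y0)\<bar> \<le> \<bar>K y - K y0\<bar> + \<bar>(y - y0) * (G y - G y0)\<bar>"
        by (rule abs_triangle_ineq)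
      then show ?thesis using \<open>R y - R y0 - (y - y0) * G y0 = (K y - K y0) + (y - y0) * (G y - G y0)\<close>
        by (simp add: abs_mult)
    qed
    then show ?thesis using Kest by (simp add: algebra_simps)
  qed
  have Rder: "(R has_real_derivative G y0) (at y0 within {t..T})" if y0: "y0 \<in> {t..T}" for y0
  proof -
    have "((\<lambda>y. (R y - R y0) / (y - y0) - G y0) \<longlongrightarrow> 0) (at y0 within {t..T})"
    proof (rule Lim_null_comparison)
      show "eventually (\<lambda>y. norm ((R y - R y0) / (y - y0) - G y0) \<le> \<bar>G y - G y0\<bar> + \<bar>A y - A y0\<bar>) (at y0 within {t..T})"
        unfolding eventually_at_filter
      proof (rule always_eventually, intro allI impI)
        fix y assume "y \<noteq> y0" "y \<in> {t..T}"
        then have "\<bar>y - y0\<bar> > 0" by simp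
        have "(R y - R y0) / (y - y0) - G y0 = (R y - R y0 - (y - y0) * G y0) / (y - y0)"
          using \<open>y \<noteq> y0\<close> by (simp add: field_simps)
        then have "norm ((R y - R y0) / (y - y0) - G y0) = \<bar>R y - R y0 - (y - y0) * G y0\<bar> / \<bar>y - y0\<bar>"
          by (simp add: abs_divide)
        also have "\<dots> \<le> \<bar>G y - G y0\<bar> + \<bar>A y - A y0\<bar>"
          using est[OF \<open>y \<in> {t..T}\<close> y0] \<open>\<bar>y - y0\<bar> > 0\<close>
          by (simp add: divide_le_eq mult.commute)
        finally show "norm ((R y - R y0) / (y - y0) - G y0) \<le> \<bar>G y - G y0\<bar> + \<bar>A y - A y0\<bar>" .
      qed
      have "(G \<longlongrightarrow> G y0) (at y0 within {t..T})" "(A \<longlongrightarrow> A y0) (at y0 within {t..T})"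
        using Gc Ac y0 by (auto simp: continuous_on_def)
      then show "((\<lambda>y. \<bar>G y - G y0\<bar> + \<bar>A y - A y0\<bar>) \<longlongrightarrow> 0) (at y0 within {t..T})"
      proof -
        have "((\<lambda>y. G y - G y0) \<longlongrightarrow> 0) (at y0 within {t..T})" "((\<lambda>y. A y - A y0) \<longlongrightarrow> 0) (at y0 within {t..T})"
          using \<open>(G \<longlongrightarrow> G y0) (at y0 within {t..T})\<close> \<open>(A \<longlongrightarrow> A y0) (at y0 within {t..T})\<close>
          by (simp_all add: Lim_null[symmetric])
        then show ?thesis using tendsto_add[OF tendsto_rabs_zero tendsto_rabs_zero] by fastforce
      qed
    qed
    then have "((\<lambda>y. (R y - R y0) / (y - y0)) \<longlongrightarrow> G y0) (at y0 within {t..T})"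
      by (simp add: Lim_null[symmetric])
    then show ?thesis by (simp add: has_field_derivative_iff)
  qed
  have Lder: "(L has_real_derivative G y0) (at y0 within {t..T})" if y0: "y0 \<in> {t..T}" for y0
  proof -
    have "(L has_real_derivative xi' y0 - xi' t) (at y0 within {t..T})"
      unfolding L_def by (auto intro!: derivative_eq_intros der y0)
    then show ?thesis using xi'[OF y0] by (simp add: G_def)
  qed
  have "\<exists>c. \<forall>y\<in>{t..T}. R y - L y = c"
  proof (rule has_field_derivative_zero_constant)
    fix y assume "y \<in> {t..T}"
    show "((\<lambda>y. R y - L y) has_real_derivative 0) (at y within {t..T})"
      using DERIV_diff[OF Rder[OF \<open>y \<in> {t..T}\<close>] Lder[OF \<open>y \<in> {t..T}\<close>]] by simp
  qed simp
  then obtain c where c: "\<And>y. y \<in> {t..T} \<Longrightarrow> R y - L y = c" by blast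
  have "t \<le> T" using s by linarith
  have "R t - L t = 0" unfolding R_def L_def by simp
  then have "R \<sigma> - L \<sigma> = 0" using c[of t] c[of \<sigma>] s \<open>t \<le> T\<close> by auto
  then show ?thesis unfolding R_def L_def by simp
qed


lemma pp_integral:
  fixes e \<sigma> a b :: real
  assumes e: "e > 0" and ab: "a \<le> b"
  shows "((\<lambda>u. (max (\<sigma> - u) 0) powr e) has_integral
          ((max (\<sigma> - a) 0) powr (e+1) - (max (\<sigma> - b) 0) powr (e+1)) / (e+1)) {a..b}"
proof -
  define F where "F u = - ((max (\<sigma> - u) 0) powr (e+1)) / (e+1)" for u
  have "(F has_real_derivative (max (\<sigma> - u) 0) powr e) (at u within {a..b})" for u
  proof -
    have d: "((\<lambda>u. \<sigma> - u) has_real_derivative -1) (at u within {a..b})"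
      by (auto intro!: derivative_eq_intros)
    have "((\<lambda>u. (max (\<sigma> - u) 0) powr (e+1)) has_real_derivative (e+1) * (max (\<sigma> - u) 0) powr (e+1-1) * -1) (at u within {a..b})"
      by (rule pp_deriv_chain[OF _ d]) (use e in simp)
    then have "((\<lambda>u. - ((max (\<sigma> - u) 0) powr (e+1)) / (e+1)) has_real_derivative - ((e+1) * (max (\<sigma> - u) 0) powr (e+1-1) * -1) / (e+1)) (at u within {a..b})"
      using DERIV_cdivide[OF DERIV_minus[OF \<open>((\<lambda>u. (max (\<sigma> - u) 0) powr (e+1)) has_real_derivative (e+1) * (max (\<sigma> - u) 0) powr (e+1-1) * -1) (at u within {a..b})\<close>], of "e+1"] by simp
    then show ?thesis using e unfolding F_def by simp
  qed
  then have "((\<lambda>u. (max (\<sigma> - u) 0) powr e) has_integral (F b - F a)) {a..b}"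
    using ab by (intro fundamental_theorem_of_calculus) (auto simp: has_real_derivative_iff_has_vector_derivative[symmetric])
  then show ?thesis unfolding F_def by (simp add: diff_divide_distrib)
qed

lemma lower_bound:
  fixes g xi xi' :: "real \<Rightarrow> real"
  assumes q: "q > 1" and p: "p = q / (q - 1)"
    and adm: "admissible q T t x v xi xi' g" and s: "0 < s" "t + s \<le> T" and \<beta>: "\<beta> \<ge> 0"
  shows "\<beta> * (v * s - (1 - x)) - \<beta> powr p * s powr (p+1) / (p * (p+1))
           \<le> (1/q) * integral {t..T} (\<lambda>r. \<bar>g r\<bar> powr q)"
proof -
  define \<sigma> where "\<sigma> = t + s"
  have W: "W2q q t T xi xi' g" and x: "xi t = x" and v: "xi' t = v"
    and box: "\<forall>s\<in>{t..T}. xi s \<in> {-1..1}"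
    using adm unfolding admissible_def by blast+
  have gabs: "g absolutely_integrable_on {t..T}" and gq: "(\<lambda>s. \<bar>g s\<bar> powr q) integrable_on {t..T}"
    using W unfolding W2q_def by blast+
  have p1: "p > 1" using q unfolding p by (simp add: less_divide_eq)
  have pq: "1/p + 1/q = 1" using q unfolding p by (simp add: field_simps)
  have tT: "t \<le> \<sigma>" "\<sigma> \<le> T" using s unfolding \<sigma>_def by auto
  have tay: "xi \<sigma> = x + v * s + integral {t..\<sigma>} (\<lambda>r. (\<sigma> - r) * g r)"
    using taylor_W2q[OF W tT] x v unfolding \<sigma>_def by simp
  have "xi \<sigma> \<le> 1" using box tT by auto
  then have I: "v * s - (1 - x) \<le> integral {t..\<sigma>} (\<lambda>r. (\<sigma> - r) * (- g r))"
    using tay by (simp add: integral_neg)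
  have sub: "{t..\<sigma>} \<subseteq> {t..T}" using tT by auto
  have wint: "(\<lambda>r. (\<sigma> - r) * (- g r)) integrable_on {t..\<sigma>}"
  proof -
    have "(\<lambda>r. (r - \<sigma>) * g r) absolutely_integrable_on {t..\<sigma>}"
      using absolutely_integrable_on_subinterval[OF gabs sub]
      by (intro abs_int_weight) (auto intro!: continuous_intros)
    moreover have "(\<lambda>r. (\<sigma> - r) * (- g r)) = (\<lambda>r. (r - \<sigma>) * g r)"
      by (auto simp: algebra_simps)
    ultimately have "(\<lambda>r. (\<sigma> - r) * (- g r)) absolutely_integrable_on {t..\<sigma>}" by simp
    then show ?thesis by (simp add: absolutely_integrable_on_def)
  qed
  have hint: "((\<lambda>r. (max (\<sigma> - r) 0) powr p) has_integral ((max (\<sigma> - t) 0) powr (p+1) - (max (\<sigma> - \<sigma>) 0) powr (p+1)) / (p+1)) {t..\<sigma>}"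
    using pp_integral[of p t \<sigma> \<sigma>] p1 tT by simp
  have hint': "((\<lambda>r. (max (\<sigma> - r) 0) powr p) has_integral s powr (p+1) / (p+1)) {t..\<sigma>}"
    using hint p1 s unfolding \<sigma>_def by (simp add: max_def)
  have gqs: "(\<lambda>r. \<bar>g r\<bar> powr q) integrable_on {t..\<sigma>}"
    using integrable_subinterval_real[OF gq sub] .
  have young: "\<beta> * ((\<sigma> - r) * (- g r)) \<le> \<beta> powr p * (max (\<sigma> - r) 0) powr p / p + \<bar>g r\<bar> powr q / q"
    if r: "r \<in> {t..\<sigma>}" for r
  proof -
    have "\<beta> * ((\<sigma> - r) * (- g r)) \<le> (\<beta> * (\<sigma> - r)) * \<bar>g r\<bar>"
    proof -
      have "\<sigma> - r \<ge> 0" using r by auto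
      then have "(\<sigma> - r) * (- g r) \<le> (\<sigma> - r) * \<bar>g r\<bar>" by (intro mult_left_mono) auto
      then have "\<beta> * ((\<sigma> - r) * (- g r)) \<le> \<beta> * ((\<sigma> - r) * \<bar>g r\<bar>)" by (rule mult_left_mono[OF _ \<beta>])
      then show ?thesis by (simp add: mult.assoc)
    qed
    also have "\<dots> \<le> (\<beta> * (\<sigma> - r)) powr p / p + \<bar>g r\<bar> powr q / q"
      by (rule Youngs_inequality[OF p1 q pq]) (use r \<beta> in auto)
    also have "(\<beta> * (\<sigma> - r)) powr p = \<beta> powr p * (max (\<sigma> - r) 0) powr p"
      using r \<beta> by (simp add: powr_mult max_def)
    finally show ?thesis .
  qed
  have "\<beta> * (v * s - (1 - x)) \<le> \<beta> * integral {t..\<sigma>} (\<lambda>r. (\<sigma> - r) * (- g r))"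
    using I \<beta> by (rule mult_left_mono)
  also have "\<dots> = integral {t..\<sigma>} (\<lambda>r. \<beta> * ((\<sigma> - r) * (- g r)))"
    by (simp add: integral_mult_right)
  also have "\<dots> \<le> integral {t..\<sigma>} (\<lambda>r. \<beta> powr p * (max (\<sigma> - r) 0) powr p / p + \<bar>g r\<bar> powr q / q)"
  proof (rule integral_le)
    show "(\<lambda>r. \<beta> * ((\<sigma> - r) * (- g r))) integrable_on {t..\<sigma>}"
      using integrable_on_mult_right[OF wint] .
    show "(\<lambda>r. \<beta> powr p * (max (\<sigma> - r) 0) powr p / p + \<bar>g r\<bar> powr q / q) integrable_on {t..\<sigma>}"
      using integrable_add[OF integrable_on_mult_left[OF integrable_on_mult_right[OF has_integral_integrable[OF hint']]]
                              integrable_on_mult_left[OF gqs]]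
      by (simp add: divide_inverse)
  qed (use young in auto)
  also have "\<dots> = \<beta> powr p * (s powr (p+1) / (p+1)) / p + integral {t..\<sigma>} (\<lambda>r. \<bar>g r\<bar> powr q) / q"
  proof -
    have "((\<lambda>r. \<beta> powr p * (max (\<sigma> - r) 0) powr p / p + \<bar>g r\<bar> powr q / q) has_integral
           (\<beta> powr p * (s powr (p+1) / (p+1)) / p + integral {t..\<sigma>} (\<lambda>r. \<bar>g r\<bar> powr q) / q)) {t..\<sigma>}"
      using has_integral_add[OF has_integral_mult_left[OF has_integral_mult_right[OF hint', where c="\<beta> powr p"], of "1/p"]
                                 has_integral_mult_left[OF integrable_integral[OF gqs], of "1/q"]]
      by (simp add: divide_inverse ac_simps)
    then show ?thesis by (rule integral_unique)
  qed
  also have "integral {t..\<sigma>} (\<lambda>r. \<bar>g r\<bar> powr q) \<le> integral {t..T} (\<lambda>r. \<bar>g r\<bar> powr q)"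
    by (rule integral_subset_le[OF sub gqs gq]) simp
  finally show ?thesis using q p1 by (simp add: divide_right_mono field_simps)
qed


definition ppow :: "real \<Rightarrow> real \<Rightarrow> real" where
  "ppow e y = (max y 0) powr e"

lemma ppow_nonneg: "ppow e y \<ge> 0" by (simp add: ppow_def)

lemma ppow_DERIV[derivative_intros]:
  assumes "e > 1" "(f has_real_derivative f') (at y within S)"
  shows "((\<lambda>y. ppow e (f y)) has_real_derivative e * ppow (e-1) (f y) * f') (at y within S)"
  using pp_deriv_chain[OF assms] unfolding ppow_def .

lemma continuous_on_ppow[continuous_intros]:
  assumes "e > 0" "continuous_on S f"
  shows "continuous_on S (\<lambda>y. ppow e (f y))"
  unfolding ppow_def
  by (rule continuous_on_powr') (use assms in \<open>auto intro!: continuous_intros\<close>)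

lemma ppow_integral:
  fixes e \<sigma> a b :: real
  assumes e: "e > 0" and ab: "a \<le> b"
  shows "((\<lambda>u. ppow e (\<sigma> - u)) has_integral (ppow (e+1) (\<sigma> - a) - ppow (e+1) (\<sigma> - b)) / (e+1)) {a..b}"
  using pp_integral[OF e ab] unfolding ppow_def .

lemma phi_eqI:
  assumes low: "\<And>xi xi' g. admissible q T t x v xi xi' g \<Longrightarrow> C \<le> (1/q) * integral {t..T} (\<lambda>s. \<bar>g s\<bar> powr q)"
    and adm: "admissible q T t x v xi0 xi0' g0"
    and val: "(1/q) * integral {t..T} (\<lambda>s. \<bar>g0 s\<bar> powr q) = C"
  shows "phi_tilde q T t x v = ereal C"
  unfolding phi_tilde_def
proof (rule antisym)
  show "(INF c\<in>{(xi, xi', g). admissible q T t x v xi xi' g}. ereal ((1/q) * integral {t..T} (\<lambda>s. \<bar>snd (snd c) s\<bar> powr q))) \<le> ereal C"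
    using INF_lower[of "(xi0, xi0', g0)" "{(xi, xi', g). admissible q T t x v xi xi' g}"
        "\<lambda>c. ereal ((1/q) * integral {t..T} (\<lambda>s. \<bar>snd (snd c) s\<bar> powr q))"] adm val by simp
  show "ereal C \<le> (INF c\<in>{(xi, xi', g). admissible q T t x v xi xi' g}. ereal ((1/q) * integral {t..T} (\<lambda>s. \<bar>snd (snd c) s\<bar> powr q)))"
  proof (rule INF_greatest)
    fix c assume "c \<in> {(xi, xi', g). admissible q T t x v xi xi' g}"
    then obtain a b d where "c = (a, b, d)" "admissible q T t x v a b d" by auto
    then show "ereal C \<le> ereal ((1/q) * integral {t..T} (\<lambda>s. \<bar>snd (snd c) s\<bar> powr q))"
      using low[of a b d] by simp
  qed
qed

lemma construction:
  fixes q p T t x v s c :: real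
  assumes q: "q > 1" and p: "p = q / (q - 1)"
    and s: "0 < s" "t + s \<le> T" and x: "-1 \<le> x" "x \<le> 1" and c: "c \<ge> 0"
    and eq: "c * s powr (p+1) / (p+1) = v * s - (1 - x)"
    and vpos: "v - c * s powr p / p \<ge> 0"
    and stop: "t + s = T \<or> v = c * s powr p / p"
  defines "\<sigma> \<equiv> t + s"
  defines "xi \<equiv> (\<lambda>r. x + v * (r - t) - (c/p) * (s powr p * (r - t) - (s powr (p+1) - ppow (p+1) (\<sigma> - r)) / (p+1)))"
    and "xi' \<equiv> (\<lambda>r. v - (c/p) * (s powr p - ppow p (\<sigma> - r)))"
    and "g \<equiv> (\<lambda>r. - c * ppow (p-1) (\<sigma> - r))"
  shows "admissible q T t x v xi xi' g \<and>
         (1/q) * integral {t..T} (\<lambda>r. \<bar>g r\<bar> powr q) = c powr q * s powr (p+1) / (q * (p+1))"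
proof -
  have p1: "p > 1" using q unfolding p by (simp add: less_divide_eq)
  have pq: "(p - 1) * q = p" using q unfolding p by (simp add: field_simps)
  have tT: "t \<le> T" "t \<le> \<sigma>" "\<sigma> \<le> T" using s unfolding \<sigma>_def by auto
  have ms: "ppow e (\<sigma> - t) = s powr e" for e using s unfolding \<sigma>_def ppow_def by simp
  have m0: "r \<ge> \<sigma> \<Longrightarrow> ppow e (\<sigma> - r) = 0" for e r unfolding ppow_def by simp
  have xider: "(xi has_real_derivative xi' r) (at r within S)" for r S
  proof -
    have "(xi has_real_derivative v - (c/p) * (s powr p - (- ((p+1) * ppow (p+1-1) (\<sigma> - r) * -1) / (p+1)))) (at r within S)"
      unfolding xi_def by (rule derivative_eq_intros refl | use p1 in simp)+
    then show ?thesis unfolding xi'_def using p1 by simp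
  qed
  have xi'nn: "xi' r \<ge> 0" for r
  proof -
    have "(c/p) * (s powr p - ppow p (\<sigma> - r)) \<le> (c/p) * s powr p"
      using c p1 by (intro mult_left_mono) (auto simp: ppow_nonneg)
    then show ?thesis unfolding xi'_def using vpos by simp
  qed
  have gcont: "continuous_on {t..T} g" unfolding g_def using p1
    by (auto intro!: continuous_intros)
  have gabs: "g absolutely_integrable_on {t..T}"
    by (rule absolutely_integrable_continuous_real[OF gcont])
  have gq_eq: "\<bar>g r\<bar> powr q = c powr q * ppow p (\<sigma> - r)" for r
  proof -
    have "\<bar>g r\<bar> = c * ppow (p-1) (\<sigma> - r)" unfolding g_def using c by (simp add: ppow_nonneg abs_mult)
    then have "\<bar>g r\<bar> powr q = c powr q * (ppow (p-1) (\<sigma> - r)) powr q"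
      using c by (simp add: powr_mult ppow_nonneg)
    also have "(ppow (p-1) (\<sigma> - r)) powr q = ppow p (\<sigma> - r)"
      unfolding ppow_def by (simp add: powr_powr pq)
    finally show ?thesis .
  qed
  have gq_int: "((\<lambda>r. \<bar>g r\<bar> powr q) has_integral c powr q * (s powr (p+1) / (p+1))) {t..T}"
  proof -
    have "((\<lambda>r. ppow p (\<sigma> - r)) has_integral (ppow (p+1) (\<sigma> - t) - ppow (p+1) (\<sigma> - T)) / (p+1)) {t..T}"
      using ppow_integral[of p t T \<sigma>] p1 tT by simp
    then have "((\<lambda>r. ppow p (\<sigma> - r)) has_integral s powr (p+1) / (p+1)) {t..T}"
      using ms m0[of T] tT by simp
    then show ?thesis unfolding gq_eq by (rule has_integral_mult_right)
  qed
  have W: "W2q q t T xi xi' g"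
    unfolding W2q_def
  proof (intro conjI ballI)
    fix r assume "r \<in> {t..T}"
    show "(xi has_real_derivative xi' r) (at r within {t..T})" by (rule xider)
  next
    show "g absolutely_integrable_on {t..T}" by (rule gabs)
  next
    show "(\<lambda>s. \<bar>g s\<bar> powr q) integrable_on {t..T}" using gq_int by blast
  next
    fix r assume r: "r \<in> {t..T}"
    have "((\<lambda>u. ppow (p-1) (\<sigma> - u)) has_integral (ppow (p-1+1) (\<sigma> - t) - ppow (p-1+1) (\<sigma> - r)) / (p-1+1)) {t..r}"
      using ppow_integral[of "p-1" t r \<sigma>] p1 r by simp
    then have "((\<lambda>u. ppow (p-1) (\<sigma> - u)) has_integral (s powr p - ppow p (\<sigma> - r)) / p) {t..r}"
      using ms by simp
    from has_integral_cmul[OF this, of "-c"]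
    have "(g has_integral - c * ((s powr p - ppow p (\<sigma> - r)) / p)) {t..r}"
      unfolding g_def by simp
    then have "integral {t..r} g = - c * ((s powr p - ppow p (\<sigma> - r)) / p)"
      by (rule integral_unique)
    then show "xi' r = xi' t + integral {t..r} g"
      unfolding xi'_def using ms by (simp add: algebra_simps diff_divide_distrib)
  qed
  have xit: "xi t = x" unfolding xi_def using ms by simp
  have xi't: "xi' t = v" unfolding xi'_def using ms by simp
  have xis: "xi \<sigma> = 1"
  proof -
    have "xi \<sigma> = x + v * s - (c/p) * (s powr p * s - s powr (p+1) / (p+1))"
      unfolding xi_def \<sigma>_def ppow_def by simp
    also have "s powr p * s = s powr (p+1)" using s by (simp add: powr_add)
    also have "x + v * s - (c/p) * (s powr (p+1) - s powr (p+1) / (p+1)) = x + v * s - c * s powr (p+1) / (p+1)"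
      using p1 by (simp add: field_simps)
    finally show ?thesis using eq by simp
  qed
  have mono: "xi a \<le> xi b" if "a \<le> b" for a b
    by (rule DERIV_nonneg_imp_nondecreasing[OF that]) (use xider xi'nn in blast)
  have after: "xi r = xi \<sigma> + (v - c * s powr p / p) * (r - \<sigma>)" if "r \<ge> \<sigma>" for r
    unfolding xi_def using m0[OF that] m0[of \<sigma>] by (simp add: algebra_simps diff_divide_distrib add_divide_distrib)
  have box: "\<forall>r\<in>{t..T}. xi r \<in> {-1..1}"
  proof
    fix r assume r: "r \<in> {t..T}"
    have lo: "xi r \<ge> -1" using mono[of t r] r xit x by auto
    have hi: "xi r \<le> 1"
    proof (cases "r \<le> \<sigma>")
      case True then show ?thesis using mono[OF True] xis by simp
    next
      case False
      then have "\<sigma> < T" using r by auto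
      then have "v = c * s powr p / p" using stop unfolding \<sigma>_def by auto
      then show ?thesis using after[of r] False xis by simp
    qed
    show "xi r \<in> {-1..1}" using lo hi by simp
  qed
  have adm: "admissible q T t x v xi xi' g"
    unfolding admissible_def using W xit xi't box by blast
  have "(1/q) * integral {t..T} (\<lambda>r. \<bar>g r\<bar> powr q) = (1/q) * (c powr q * (s powr (p+1) / (p+1)))"
    using integral_unique[OF gq_int] by simp
  then show ?thesis using adm by simp
qed


lemma case5_alg:
  fixes q p a v s c :: real
  assumes q: "q > 1" and p: "p = q / (q - 1)" and a: "a > 0" and v: "v > 0"
    and s: "s = (p+1) * a / v" and c: "c = p * v / s powr p"
  shows "c powr q * s powr (p+1) / (q * (p+1)) = q powr (q-1) / (2*q-1) powr q * (v powr (2*q-1) / a powr (q-1))"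
proof -
  have p0: "p > 0" using q p by simp
  have s0: "s > 0" using s a v p0 by simp
  have c0: "c > 0" using c p0 v s0 by simp
  have p1: "p + 1 = (2*q-1)/(q-1)" using q p by (simp add: field_simps)
  have lnp: "ln p = ln q - ln (q-1)" using q p by (simp add: ln_div)
  have lnp1: "ln (p+1) = ln (2*q-1) - ln (q-1)" using q p1 by (simp add: ln_div)
  have lns: "ln s = ln (p+1) + ln a - ln v" using s a v p0 by (simp add: ln_div ln_mult)
  have lnc: "ln c = ln p + ln v - p * ln s" using c p0 v s0 by (simp add: ln_div ln_mult ln_powr)
  have q1: "2*q - 1 > 0" using q by simp
  have qp: "q * p = p + q" using q unfolding p by (simp add: field_simps)
  have L: "ln (c powr q * s powr (p+1) / (q * (p+1))) = q * ln c + (p+1) * ln s - ln q - ln (p+1)"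
    using q c0 s0 p0 by (simp add: ln_mult ln_div ln_powr)
  have R: "ln (q powr (q-1) / (2*q-1) powr q * (v powr (2*q-1) / a powr (q-1))) = (q-1) * ln q - q * ln (2*q-1) + (2*q-1) * ln v - (q-1) * ln a"
    using q q1 a v by (simp add: ln_mult ln_div ln_powr)
  have "ln (c powr q * s powr (p+1) / (q * (p+1))) = ln (q powr (q-1) / (2*q-1) powr q * (v powr (2*q-1) / a powr (q-1)))"
    unfolding L R lnc lns lnp lnp1 using qp by algebra
  then show ?thesis
    using q a v c0 s0 p0 by (subst ln_inj_iff[symmetric]) auto
qed

lemma case4_alg:
  fixes q p a v \<tau> c :: real
  assumes q: "q > 1" and p: "p = q / (q - 1)" and w: "v * \<tau> - a > 0" and \<tau>: "\<tau> > 0"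
    and c: "c = (p+1) * (v * \<tau> - a) / \<tau> powr (p+1)"
  shows "c powr q * \<tau> powr (p+1) / (q * (p+1)) =
         (1/q) * ((2*q-1) powr (q-1) / (q-1) powr (q-1)) * ((v + (- a) / \<tau>) powr q / \<tau> powr (q-1))"
proof -
  define w where "w = v * \<tau> - a"
  have w0: "w > 0" using w unfolding w_def .
  have p0: "p > 0" using q p by simp
  have c0: "c > 0" using c p0 w0 \<tau> unfolding w_def by simp
  have p1: "p + 1 = (2*q-1)/(q-1)" using q p by (simp add: field_simps)
  have lnp1: "ln (p+1) = ln (2*q-1) - ln (q-1)" using q p1 by (simp add: ln_div)
  have lnc: "ln c = ln (p+1) + ln w - (p+1) * ln \<tau>" using c p0 w0 \<tau> unfolding w_def by (simp add: ln_div ln_mult ln_powr)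
  have q1: "2*q - 1 > 0" using q by simp
  have qp: "q * p = p + q" using q unfolding p by (simp add: field_simps)
  have vw: "v + (- a) / \<tau> = w / \<tau>" using \<tau> unfolding w_def by (simp add: field_simps)
  have L: "ln (c powr q * \<tau> powr (p+1) / (q * (p+1))) = q * ln c + (p+1) * ln \<tau> - ln q - ln (p+1)"
    using q c0 \<tau> p0 by (simp add: ln_mult ln_div ln_powr)
  have R: "ln ((1/q) * ((2*q-1) powr (q-1) / (q-1) powr (q-1)) * ((w / \<tau>) powr q / \<tau> powr (q-1))) =
      - ln q + (q-1) * ln (2*q-1) - (q-1) * ln (q-1) + q * (ln w - ln \<tau>) - (q-1) * ln \<tau>"
    using q q1 w0 \<tau> by (simp add: ln_mult ln_div ln_powr)
  have "ln (c powr q * \<tau> powr (p+1) / (q * (p+1))) = ln ((1/q) * ((2*q-1) powr (q-1) / (q-1) powr (q-1)) * ((w / \<tau>) powr q / \<tau> powr (q-1)))"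
  proof -
    have k: "(p+1)*(q-1) = 2*q-1" using qp by (simp add: algebra_simps)
    have "q * ln c + (p+1) * ln \<tau> = q * ln (p+1) + q * ln w - ((p+1)*(q-1)) * ln \<tau>"
      unfolding lnc by (simp add: algebra_simps)
    also have "\<dots> = q * ln (p+1) + q * ln w - (2*q-1) * ln \<tau>" unfolding k ..
    finally have e: "q * ln c + (p+1) * ln \<tau> = q * ln (p+1) + q * ln w - (2*q-1) * ln \<tau>" .
    have e2: "q * ln (p+1) = q * ln (2*q-1) - q * ln (q-1)" unfolding lnp1 by (simp add: algebra_simps)
    have e3: "(q-1) * ln (2*q-1) - (q-1) * ln (q-1) = q * ln (2*q-1) - q * ln (q-1) - ln (2*q-1) + ln (q-1)"
      by (simp add: algebra_simps)
    have e4: "q * (ln w - ln \<tau>) - (q-1) * ln \<tau> = q * ln w - (2*q-1) * ln \<tau>"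
      by (simp add: algebra_simps)
    show ?thesis unfolding L R using e e2 e3 e4 lnp1 by linarith
  qed
  then show ?thesis
    unfolding vw using q q1 w0 c0 \<tau> p0 by (subst ln_inj_iff[symmetric]) auto
qed

lemma phi_core:
  fixes q p T t x v s c :: real
  assumes q: "q > 1" and p: "p = q / (q - 1)"
    and s: "0 < s" "t + s \<le> T" and x: "-1 \<le> x" "x \<le> 1" and c: "c \<ge> 0"
    and eq: "c * s powr (p+1) / (p+1) = v * s - (1 - x)"
    and vpos: "v - c * s powr p / p \<ge> 0"
    and stop: "t + s = T \<or> v = c * s powr p / p"
  shows "phi_tilde q T t x v = ereal (c powr q * s powr (p+1) / (q * (p+1)))"
proof -
  have p1: "p > 1" using q unfolding p by (simp add: less_divide_eq)
  have qp: "q * p = p + q" using q unfolding p by (simp add: field_simps)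
  obtain xi xi' g where adm: "admissible q T t x v xi xi' g"
    and val: "(1/q) * integral {t..T} (\<lambda>r. \<bar>g r\<bar> powr q) = c powr q * s powr (p+1) / (q * (p+1))"
    using construction[OF q p s x c eq vpos stop] by blast
  show ?thesis
  proof (rule phi_eqI[OF _ adm val])
    fix a b d assume ad: "admissible q T t x v a b d"
    define \<beta> where "\<beta> = c powr (q-1)"
    have \<beta>0: "\<beta> \<ge> 0" unfolding \<beta>_def by simp
    have lb: "\<beta> * (v * s - (1 - x)) - \<beta> powr p * s powr (p+1) / (p * (p+1))
           \<le> (1/q) * integral {t..T} (\<lambda>r. \<bar>d r\<bar> powr q)"
      by (rule lower_bound[OF q p ad s \<beta>0])
    have b1: "\<beta> * c = c powr q"
    proof (cases "c = 0")
      case True then show ?thesis unfolding \<beta>_def using q by simp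
    next
      case False then have "c > 0" using c by simp
      then show ?thesis unfolding \<beta>_def by (simp add: powr_diff)
    qed
    have b2: "\<beta> powr p = c powr q"
    proof -
      have "(q - 1) * p = q" using q unfolding p by (simp add: field_simps)
      then show ?thesis unfolding \<beta>_def powr_powr by simp
    qed
    have "\<beta> * (v * s - (1 - x)) - \<beta> powr p * s powr (p+1) / (p * (p+1))
        = c powr q * s powr (p+1) / (p+1) - c powr q * s powr (p+1) / (p * (p+1))"
      unfolding eq[symmetric] b2 using b1 by (simp add: mult.assoc[symmetric])
    also have "\<dots> = c powr q * s powr (p+1) / (q * (p+1))"
    proof -
      define X where "X = c powr q * s powr (p+1)"
      have iq: "1 - 1 / p = 1 / q" using q unfolding p by (simp add: field_simps)
      have "X / (p+1) - X / (p * (p+1)) = X / (p+1) - X / (p+1) * (1 / p)" by simp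
      also have "\<dots> = X / (p+1) * (1 - 1 / p)" by (simp add: right_diff_distrib)
      also have "\<dots> = X / (q * (p+1))" unfolding iq by simp
      finally have "X / (p+1) - X / (p * (p+1)) = X / (q * (p+1))" .
      then show ?thesis unfolding X_def .
    qed
    finally show "c powr q * s powr (p+1) / (q * (p+1)) \<le> (1/q) * integral {t..T} (\<lambda>r. \<bar>d r\<bar> powr q)"
      using lb by simp
  qed
qed


lemma adm_neg:
  assumes "admissible q T t x v xi xi' g"
  shows "admissible q T t (-x) (-v) (\<lambda>r. - xi r) (\<lambda>r. - xi' r) (\<lambda>r. - g r)"
proof -
  have der: "\<And>s. s \<in> {t..T} \<Longrightarrow> (xi has_real_derivative xi' s) (at s within {t..T})"
    and gabs: "g absolutely_integrable_on {t..T}"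
    and gq: "(\<lambda>s. \<bar>g s\<bar> powr q) integrable_on {t..T}"
    and xi': "\<And>s. s \<in> {t..T} \<Longrightarrow> xi' s = xi' t + integral {t..s} g"
    and x: "xi t = x" and v: "xi' t = v" and box: "\<And>s. s \<in> {t..T} \<Longrightarrow> xi s \<in> {-1..1}"
    using assms unfolding admissible_def W2q_def by blast+
  have gint: "g integrable_on {t..T}" using gabs by (simp add: absolutely_integrable_on_def)
  have ngabs: "(\<lambda>r. - g r) absolutely_integrable_on {t..T}"
    using gabs by (simp add: absolutely_integrable_on_def integrable_neg)
  have "W2q q t T (\<lambda>r. - xi r) (\<lambda>r. - xi' r) (\<lambda>r. - g r)"
    unfolding W2q_def
  proof (intro conjI ballI)
    fix s assume s: "s \<in> {t..T}"
    show "((\<lambda>r. - xi r) has_real_derivative - xi' s) (at s within {t..T})"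
      using DERIV_minus[OF der[OF s]] .
    have "g integrable_on {t..s}" using integrable_subinterval_real[OF gint] s by auto
    then show "- xi' s = - xi' t + integral {t..s} (\<lambda>r. - g r)"
      using xi'[OF s] by (simp add: integral_neg)
  qed (use ngabs gq in auto)
  then show ?thesis unfolding admissible_def using x v box by auto
qed

lemma phi_sym_le: "phi_tilde q T t (-x) (-v) \<le> phi_tilde q T t x v"
  unfolding phi_tilde_def
proof (rule INF_greatest)
  fix c assume "c \<in> {(xi, xi', g). admissible q T t x v xi xi' g}"
  then obtain a b d where c: "c = (a, b, d)" and ad: "admissible q T t x v a b d" by auto
  have "(\<lambda>r. - a r, \<lambda>r. - b r, \<lambda>r. - d r) \<in> {(xi, xi', g). admissible q T t (-x) (-v) xi xi' g}"
    using adm_neg[OF ad] by simp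
  then have "(INF c\<in>{(xi, xi', g). admissible q T t (-x) (-v) xi xi' g}. ereal ((1/q) * integral {t..T} (\<lambda>s. \<bar>snd (snd c) s\<bar> powr q)))
      \<le> ereal ((1/q) * integral {t..T} (\<lambda>s. \<bar>- d s\<bar> powr q))"
    by (rule INF_lower2) simp
  then show "(INF c\<in>{(xi, xi', g). admissible q T t (-x) (-v) xi xi' g}. ereal ((1/q) * integral {t..T} (\<lambda>s. \<bar>snd (snd c) s\<bar> powr q)))
      \<le> ereal ((1/q) * integral {t..T} (\<lambda>s. \<bar>snd (snd c) s\<bar> powr q))"
    using c by simp
qed

lemma phi_sym: "phi_tilde q T t x v = phi_tilde q T t (-x) (-v)"
  using phi_sym_le[of q T t x v] phi_sym_le[of q T t "-x" "-v"] by simp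

lemma phi_case3:
  assumes q: "q > 1" and x: "-1 \<le> x" "x \<le> 1"
    and h: "-1 - x \<le> v * (T - t)" "v * (T - t) \<le> 1 - x"
  shows "phi_tilde q T t x v = 0"
proof -
  have "phi_tilde q T t x v = ereal 0"
  proof (rule phi_eqI[of q T t x v 0 "\<lambda>r. x + v * (r - t)" "\<lambda>r. v" "\<lambda>r. 0"])
    fix a b d assume "admissible q T t x v a b d"
    then have "(\<lambda>s. \<bar>d s\<bar> powr q) integrable_on {t..T}" unfolding admissible_def W2q_def by blast
    then have "integral {t..T} (\<lambda>s. \<bar>d s\<bar> powr q) \<ge> 0" by (rule integral_nonneg) simp
    then show "0 \<le> (1/q) * integral {t..T} (\<lambda>s. \<bar>d s\<bar> powr q)" using q by simp
  next
    have box: "x + v * (r - t) \<in> {-1..1}" if r: "r \<in> {t..T}" for r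
    proof (cases "v \<ge> 0")
      case True
      have "0 \<le> v * (r - t)" "v * (r - t) \<le> v * (T - t)" using r True by (auto intro: mult_left_mono)
      then show ?thesis using x h by auto
    next
      case False
      have "v * (r - t) \<le> 0" "v * (T - t) \<le> v * (r - t)" using r False by (auto intro: mult_left_mono_neg mult_nonpos_nonneg)
      then show ?thesis using x h by auto
    qed
    show "admissible q T t x v (\<lambda>r. x + v * (r - t)) (\<lambda>r. v) (\<lambda>r. 0)"
      unfolding admissible_def W2q_def
      using box by (auto intro!: derivative_eq_intros)
  next
    show "(1/q) * integral {t..T} (\<lambda>s. \<bar>0::real\<bar> powr q) = 0" by simp
  qed
  then show ?thesis by (simp add: zero_ereal_def)
qed


lemma phi_case5:
  assumes q: "q > 1" and x: "-1 \<le> x" "x \<le> 1" and tT: "t \<le> T"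
    and h: "v * (T - t) \<ge> ((2*q-1)/(q-1)) * (1 - x)" "((2*q-1)/(q-1)) * (1 - x) > 0"
  shows "phi_tilde q T t x v = ereal (q powr (q-1) / (2*q-1) powr q * (v powr (2*q-1) / (1 - x) powr (q-1)))"
proof -
  define p where "p = q / (q - 1)"
  define a where "a = 1 - x"
  define \<tau> where "\<tau> = T - t"
  have p0: "p > 0" using q unfolding p_def by simp
  have k: "(2*q-1)/(q-1) = p + 1" using q unfolding p_def by (simp add: field_simps)
  have a0: "a > 0" using h(2) p0 unfolding k a_def by (simp add: zero_less_mult_iff)
  have vt: "v * \<tau> \<ge> (p+1) * a" using h(1) unfolding k a_def \<tau>_def .
  have vt0: "v * \<tau> > 0" using vt a0 p0 by (smt (verit) mult_pos_pos)
  have tau0: "\<tau> \<ge> 0" using tT unfolding \<tau>_def by simp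
  have v0: "v > 0" using vt0 tau0 by (simp add: zero_less_mult_iff)
  define s where "s = (p+1) * a / v"
  define c where "c = p * v / s powr p"
  have s0: "s > 0" unfolding s_def using p0 a0 v0 by simp
  have sle: "s \<le> \<tau>" unfolding s_def using v0 vt by (simp add: divide_le_eq mult.commute)
  have cs: "c * s powr p = p * v" unfolding c_def using s0 by simp
  have vs: "v * s = (p+1) * a" unfolding s_def using v0 by simp
  have "phi_tilde q T t x v = ereal (c powr q * s powr (p+1) / (q * (p+1)))"
  proof (rule phi_core[OF q p_def])
    show "0 < s" by (rule s0)
    show "t + s \<le> T" using sle unfolding \<tau>_def by simp
    show "c \<ge> 0" unfolding c_def using p0 v0 by simp
    have "c * s powr (p+1) = c * s powr p * s" using s0 by (simp add: powr_add)
    then show "c * s powr (p+1) / (p+1) = v * s - (1 - x)"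
      unfolding cs using vs p0 unfolding a_def by (simp add: field_simps)
    show "v - c * s powr p / p \<ge> 0" unfolding cs using p0 by simp
    show "t + s = T \<or> v = c * s powr p / p" unfolding cs using p0 by simp
  qed (use x in auto)
  also have "c powr q * s powr (p+1) / (q * (p+1)) = q powr (q-1) / (2*q-1) powr q * (v powr (2*q-1) / a powr (q-1))"
    by (rule case5_alg[OF q p_def a0 v0 s_def c_def])
  finally show ?thesis unfolding a_def .
qed

lemma phi_case4:
  assumes q: "q > 1" and x: "-1 \<le> x" "x \<le> 1" and tT: "t \<le> T"
    and h: "1 - x \<le> v * (T - t)" "v * (T - t) \<le> ((2*q-1)/(q-1)) * (1 - x)"
  shows "phi_tilde q T t x v = ereal ((1/q) * ((2*q-1) powr (q-1) / (q-1) powr (q-1)) *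
                  ((v + (x - 1) / (T - t)) powr q / (T - t) powr (q-1)))"
proof -
  define p where "p = q / (q - 1)"
  define a where "a = 1 - x"
  define \<tau> where "\<tau> = T - t"
  have p0: "p > 0" using q unfolding p_def by simp
  have k: "(2*q-1)/(q-1) = p + 1" using q unfolding p_def by (simp add: field_simps)
  have a0: "a \<ge> 0" using x unfolding a_def by simp
  show ?thesis
  proof (cases "v * \<tau> = a")
    case True
    have "phi_tilde q T t x v = 0"
      by (rule phi_case3[OF q x]) (use True x in \<open>auto simp: a_def \<tau>_def\<close>)
    moreover have z0: "(v + (x - 1) / (T - t)) powr q / (T - t) powr (q-1) = 0"
    proof (cases "\<tau> = 0")
      case True then show ?thesis unfolding \<tau>_def by simp
    next
      case False
      then have "v + (x - 1) / (T - t) = 0"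
        using \<open>v * \<tau> = a\<close> unfolding a_def \<tau>_def by (simp add: field_simps)
      then show ?thesis by simp
    qed
    ultimately show ?thesis by (simp only: z0 mult_zero_right zero_ereal_def)
  next
    case False
    then have vt: "v * \<tau> > a" using h(1) unfolding a_def \<tau>_def by simp
    have vt2: "v * \<tau> \<le> (p+1) * a" using h(2) unfolding k a_def \<tau>_def .
    have tau0: "\<tau> > 0"
    proof -
      have "\<tau> \<ge> 0" using tT unfolding \<tau>_def by simp
      moreover have "\<tau> \<noteq> 0" using vt a0 by auto
      ultimately show ?thesis by simp
    qed
    define c where "c = (p+1) * (v * \<tau> - a) / \<tau> powr (p+1)"
    have tp: "\<tau> powr (p+1) = \<tau> powr p * \<tau>" using tau0 by (simp add: powr_add)
    have c0: "c \<ge> 0" unfolding c_def using vt p0 tau0 by simp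
    have ct: "c * \<tau> powr p / p = (p+1) * (v * \<tau> - a) / (p * \<tau>)"
      unfolding c_def tp using tau0 p0 by (simp add: field_simps)
    have "phi_tilde q T t x v = ereal (c powr q * \<tau> powr (p+1) / (q * (p+1)))"
    proof (rule phi_core[OF q p_def])
      show "0 < \<tau>" by (rule tau0)
      show "t + \<tau> \<le> T" unfolding \<tau>_def by simp
      show "c \<ge> 0" by (rule c0)
      show "c * \<tau> powr (p+1) / (p+1) = v * \<tau> - (1 - x)"
        unfolding c_def a_def using tau0 p0 by simp
      have "(p+1) * (v * \<tau> - a) \<le> p * v * \<tau>" using vt2 by (simp add: algebra_simps)
      then have "(p+1) * (v * \<tau> - a) / (p * \<tau>) \<le> v"
        using tau0 p0 by (simp add: divide_le_eq mult.commute mult.left_commute)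
      then show "v - c * \<tau> powr p / p \<ge> 0" unfolding ct by simp
      show "t + \<tau> = T \<or> v = c * \<tau> powr p / p" unfolding \<tau>_def by simp
    qed (use x in auto)
    also have "c powr q * \<tau> powr (p+1) / (q * (p+1)) =
         (1/q) * ((2*q-1) powr (q-1) / (q-1) powr (q-1)) * ((v + (- a) / \<tau>) powr q / \<tau> powr (q-1))"
      by (rule case4_alg[OF q p_def _ tau0 c_def]) (use vt in simp)
    finally show ?thesis unfolding a_def \<tau>_def by simp
  qed
qed


lemma part1:
  fixes q T :: real
  assumes hq: "q > 1" and hT: "T > 0"
  shows
   "(\<forall>t\<in>{0..T}. \<forall>x\<in>{-1..1}. \<forall>v.
      (v * (T - t) \<le> - ((2*q-1)/(q-1)) * (1 + x) \<and> - ((2*q-1)/(q-1)) * (1 + x) < 0 \<longrightarrow>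
         phi_tilde q T t x v =
           ereal (q powr (q-1) / (2*q-1) powr q * (\<bar>v\<bar> powr (2*q-1) / (1 + x) powr (q-1)))) \<and>
      (- ((2*q-1)/(q-1)) * (1 + x) \<le> v * (T - t) \<and> v * (T - t) \<le> - (1 + x) \<longrightarrow>
         phi_tilde q T t x v =
           ereal ((1/q) * ((2*q-1) powr (q-1) / (q-1) powr (q-1)) *
                  (\<bar>v + (1 + x) / (T - t)\<bar> powr q / (T - t) powr (q-1)))) \<and>
      (-1 - x \<le> v * (T - t) \<and> v * (T - t) \<le> 1 - x \<longrightarrow>
         phi_tilde q T t x v = 0) \<and>
      (1 - x \<le> v * (T - t) \<and> v * (T - t) \<le> ((2*q-1)/(q-1)) * (1 - x) \<longrightarrow>
         phi_tilde q T t x v =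
           ereal ((1/q) * ((2*q-1) powr (q-1) / (q-1) powr (q-1)) *
                  ((v + (x - 1) / (T - t)) powr q / (T - t) powr (q-1)))) \<and>
      (v * (T - t) \<ge> ((2*q-1)/(q-1)) * (1 - x) \<and> ((2*q-1)/(q-1)) * (1 - x) > 0 \<longrightarrow>
         phi_tilde q T t x v =
           ereal (q powr (q-1) / (2*q-1) powr q * (v powr (2*q-1) / (1 - x) powr (q-1)))))"
proof (intro ballI allI conjI impI)
  fix t x v :: real assume t: "t \<in> {0..T}" and x: "x \<in> {-1..1}"
  have tT: "t \<le> T" and x1: "-1 \<le> x" "x \<le> 1" using t x by auto
  have x2: "-1 \<le> -x" "-x \<le> 1" using x1 by linarith+
  have k0: "(2*q-1)/(q-1) > 0" using hq by simp
  {
    assume h: "v * (T - t) \<le> - ((2*q-1)/(q-1)) * (1 + x) \<and> - ((2*q-1)/(q-1)) * (1 + x) < 0"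
    have "phi_tilde q T t (-x) (-v) = ereal (q powr (q-1) / (2*q-1) powr q * ((-v) powr (2*q-1) / (1 - (-x)) powr (q-1)))"
      by (rule phi_case5[OF hq x2 tT]) (use h in auto)
    moreover have "v < 0"
    proof -
      have "v * (T - t) < 0" using h by linarith
      then show ?thesis using tT by (simp add: mult_less_0_iff)
    qed
    ultimately show "phi_tilde q T t x v = ereal (q powr (q-1) / (2*q-1) powr q * (\<bar>v\<bar> powr (2*q-1) / (1 + x) powr (q-1)))"
      using phi_sym[of q T t x v] by simp
  }
  {
    assume h: "- ((2*q-1)/(q-1)) * (1 + x) \<le> v * (T - t) \<and> v * (T - t) \<le> - (1 + x)"
    have H1: "phi_tilde q T t (-x) (-v) = ereal ((1/q) * ((2*q-1) powr (q-1) / (q-1) powr (q-1)) *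
                  ((-v + (-x - 1) / (T - t)) powr q / (T - t) powr (q-1)))"
      by (rule phi_case4[OF hq x2 tT]) (use h in auto)
    have H2: "(-v + (-x - 1) / (T - t)) powr q / (T - t) powr (q-1) = \<bar>v + (1 + x) / (T - t)\<bar> powr q / (T - t) powr (q-1)"
    proof (cases "T - t = 0")
      case True then show ?thesis by simp
    next
      case False
      then have "T - t > 0" using tT by simp
      have "v + (1 + x) / (T - t) = (v * (T - t) + (1 + x)) / (T - t)" using False by (simp add: field_simps)
      also have "\<dots> \<le> 0" using h \<open>T - t > 0\<close> by (simp add: divide_nonpos_pos)
      finally have le0: "v + (1 + x) / (T - t) \<le> 0" .
      have "(-x - 1) / (T - t) = - ((1 + x) / (T - t))"
        by (simp add: diff_divide_distrib add_divide_distrib)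
      then have "\<bar>v + (1 + x) / (T - t)\<bar> = -v + (-x - 1) / (T - t)" using le0 by simp
      then show ?thesis by simp
    qed
    show "phi_tilde q T t x v = ereal ((1/q) * ((2*q-1) powr (q-1) / (q-1) powr (q-1)) *
                  (\<bar>v + (1 + x) / (T - t)\<bar> powr q / (T - t) powr (q-1)))"
      by (simp only: phi_sym[of q T t x v] H1 H2)
  }
  {
    assume h: "-1 - x \<le> v * (T - t) \<and> v * (T - t) \<le> 1 - x"
    show "phi_tilde q T t x v = 0" by (rule phi_case3[OF hq x1]) (use h in auto)
  }
  {
    assume h: "1 - x \<le> v * (T - t) \<and> v * (T - t) \<le> ((2*q-1)/(q-1)) * (1 - x)"
    show "phi_tilde q T t x v = ereal ((1/q) * ((2*q-1) powr (q-1) / (q-1) powr (q-1)) *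
                  ((v + (x - 1) / (T - t)) powr q / (T - t) powr (q-1)))"
      by (rule phi_case4[OF hq x1 tT]) (use h in auto)
  }
  {
    assume h: "v * (T - t) \<ge> ((2*q-1)/(q-1)) * (1 - x) \<and> ((2*q-1)/(q-1)) * (1 - x) > 0"
    show "phi_tilde q T t x v = ereal (q powr (q-1) / (2*q-1) powr q * (v powr (2*q-1) / (1 - x) powr (q-1)))"
      by (rule phi_case5[OF hq x1 tT]) (use h in auto)
  }
qed


definition kk :: "real \<Rightarrow> real" where "kk q = (2*q-1)/(q-1)"
definition AA :: "real \<Rightarrow> real" where "AA q = (1/q) * kk q powr (q-1)"
definition cc :: "real \<Rightarrow> real" where "cc q = q powr (q-1) / (2*q-1) powr q"
definition psi :: "real \<Rightarrow> real \<Rightarrow> real" where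
  "psi q u = (if u \<le> kk q then AA q * ppow q (u-1) else cc q * u powr (2*q-1))"
definition dpsi :: "real \<Rightarrow> real \<Rightarrow> real" where
  "dpsi q u = (if u \<le> kk q then q * AA q * ppow (q-1) (u-1) else cc q * (2*q-1) * u powr (2*q-2))"

lemma kk_gt1: "q > 1 \<Longrightarrow> kk q > 1"
  unfolding kk_def by (simp add: less_divide_eq)

lemma kk_minus1: "q > 1 \<Longrightarrow> kk q - 1 = q / (q-1)"
  unfolding kk_def by (simp add: field_simps)

lemma AA_pos: "q > 1 \<Longrightarrow> AA q > 0"
  unfolding AA_def using kk_gt1[of q] by simp

lemma cc_pos: "q > 1 \<Longrightarrow> cc q > 0"
  unfolding cc_def by simp

lemma junction0:
  assumes q: "q > 1"
  shows "AA q * (kk q - 1) powr q = cc q * kk q powr (2*q-1)"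
proof -
  have k: "kk q > 1" using kk_gt1[OF q] .
  have q2: "2*q-1 > 0" using q by simp
  have lk: "ln (kk q) = ln (2*q-1) - ln (q-1)" unfolding kk_def using q by (simp add: ln_div)
  have lk1: "ln (kk q - 1) = ln q - ln (q-1)" unfolding kk_minus1[OF q] using q by (simp add: ln_div)
  have L: "ln (AA q * (kk q - 1) powr q) = - ln q + (q-1) * ln (kk q) + q * ln (kk q - 1)"
    unfolding AA_def using q k by (simp add: ln_mult ln_div ln_powr)
  have R: "ln (cc q * kk q powr (2*q-1)) = (q-1) * ln q - q * ln (2*q-1) + (2*q-1) * ln (kk q)"
    unfolding cc_def using q k q2 by (simp add: ln_mult ln_div ln_powr)
  have "ln (AA q * (kk q - 1) powr q) = ln (cc q * kk q powr (2*q-1))"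
    unfolding L R lk lk1 by (simp add: algebra_simps)
  then show ?thesis using AA_pos[OF q] cc_pos[OF q] k
    by (subst ln_inj_iff[symmetric]) auto
qed

lemma junction1:
  assumes q: "q > 1"
  shows "q * AA q * (kk q - 1) powr (q-1) = cc q * (2*q-1) * kk q powr (2*q-2)"
proof -
  have k: "kk q > 1" using kk_gt1[OF q] .
  have q2: "2*q-1 > 0" using q by simp
  have lk: "ln (kk q) = ln (2*q-1) - ln (q-1)" unfolding kk_def using q by (simp add: ln_div)
  have lk1: "ln (kk q - 1) = ln q - ln (q-1)" unfolding kk_minus1[OF q] using q by (simp add: ln_div)
  have L: "ln (q * AA q * (kk q - 1) powr (q-1)) = (q-1) * ln (kk q) + (q-1) * ln (kk q - 1)"
    unfolding AA_def using q k by (simp add: ln_mult ln_div ln_powr)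
  have R: "ln (cc q * (2*q-1) * kk q powr (2*q-2)) = (q-1) * ln q - q * ln (2*q-1) + ln (2*q-1) + (2*q-2) * ln (kk q)"
    unfolding cc_def using q k q2 by (simp add: ln_mult ln_div ln_powr)
  have "ln (q * AA q * (kk q - 1) powr (q-1)) = ln (cc q * (2*q-1) * kk q powr (2*q-2))"
    unfolding L R lk lk1 by (simp add: algebra_simps)
  then show ?thesis using AA_pos[OF q] cc_pos[OF q] k q2 q
    by (subst ln_inj_iff[symmetric]) auto
qed

lemma psi_small: "q > 1 \<Longrightarrow> u \<le> 1 \<Longrightarrow> psi q u = 0"
  unfolding psi_def ppow_def using kk_gt1[of q] by auto

lemma dpsi_small: "q > 1 \<Longrightarrow> u \<le> 1 \<Longrightarrow> dpsi q u = 0"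
  unfolding dpsi_def ppow_def using kk_gt1[of q] by auto

lemma psi_deriv:
  assumes q: "q > 1"
  shows "(psi q has_real_derivative dpsi q u) (at u)"
proof -
  define k where "k = kk q"
  have k1: "k > 1" unfolding k_def using kk_gt1[OF q] .
  define f1 where "f1 u = AA q * ppow q (u-1)" for u
  define f2 where "f2 u = cc q * u powr (2*q-1)" for u
  have d1: "(f1 has_real_derivative q * AA q * ppow (q-1) (u-1)) (at u)" for u
    unfolding f1_def using q by (auto intro!: derivative_eq_intros)
  have d2: "(f2 has_real_derivative cc q * (2*q-1) * u powr (2*q-2)) (at u)" if "u > 0" for u
  proof -
    have "(f2 has_real_derivative cc q * ((2*q-1) * u powr (2*q-1-1))) (at u)"
      unfolding f2_def using that by (auto intro!: derivative_eq_intros)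
    then show ?thesis by (simp add: algebra_simps)
  qed
  have psi1: "u \<le> k \<Longrightarrow> psi q u = f1 u" for u unfolding psi_def f1_def k_def by simp
  have psi2: "u \<ge> k \<Longrightarrow> psi q u = f2 u" for u
  proof (cases "u = k")
    case True
    have "f1 k = f2 k" unfolding f1_def f2_def k_def ppow_def
      using junction0[OF q] kk_gt1[OF q] by simp
    then show ?thesis using True psi1[of u] by simp
  next
    case False
    assume "u \<ge> k" then show ?thesis using False unfolding psi_def f2_def k_def by simp
  qed
  have dp1: "u \<le> k \<Longrightarrow> dpsi q u = q * AA q * ppow (q-1) (u-1)" for u unfolding dpsi_def k_def by simp
  have dp2: "u \<ge> k \<Longrightarrow> dpsi q u = cc q * (2*q-1) * u powr (2*q-2)" for u
  proof (cases "u = k")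
    case True
    then show ?thesis using dp1[of u] junction1[OF q] kk_gt1[OF q] unfolding k_def ppow_def by simp
  next
    case False
    assume "u \<ge> k" then show ?thesis using False unfolding dpsi_def k_def by simp
  qed
  consider "u < k" | "u > k" | "u = k" by linarith
  then show ?thesis
  proof cases
    case 1
    have ev: "eventually (\<lambda>z. psi q z = f1 z) (nhds u)"
      using eventually_nhds_in_open[of "{..<k}" u] 1 psi1 by (auto elim!: eventually_mono)
    show ?thesis using d1[of u] dp1[of u] 1 by (subst DERIV_cong_ev[OF refl ev refl]) simp
  next
    case 2
    have ev: "eventually (\<lambda>z. psi q z = f2 z) (nhds u)"
      using eventually_nhds_in_open[of "{k<..}" u] 2 psi2 by (auto elim!: eventually_mono)
    show ?thesis using d2[of u] dp2[of u] 2 k1 by (subst DERIV_cong_ev[OF refl ev refl]) simp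
  next
    case 3
    have dd: "dpsi q u = q * AA q * ppow (q-1) (u-1)" "dpsi q u = cc q * (2*q-1) * u powr (2*q-2)"
      using dp1[of u] dp2[of u] 3 by simp_all
    have A: "(psi q has_real_derivative dpsi q u) (at u within {..k})"
    proof -
      have "(f1 has_real_derivative dpsi q u) (at u within {..k})"
        using has_field_derivative_at_within[OF d1[of u]] dd by simp
      then show ?thesis
        by (rule has_field_derivative_transform_within[where d=1]) (use 3 psi1 in auto)
    qed
    have B: "(psi q has_real_derivative dpsi q u) (at u within {k..})"
    proof -
      have "(f2 has_real_derivative dpsi q u) (at u within {k..})"
        using has_field_derivative_at_within[OF d2[of u]] dd 3 k1 by simp
      then show ?thesis
        by (rule has_field_derivative_transform_within[where d=1]) (use 3 psi2 in auto)
    qed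
    have "((\<lambda>y. (psi q y - psi q u) / (y - u)) \<longlongrightarrow> dpsi q u) (at u within ({..k} \<union> {k..}))"
      using A B unfolding has_field_derivative_iff Lim_within_Un by simp
    moreover have "{..k} \<union> {k..} = (UNIV :: real set)" by auto
    ultimately show ?thesis unfolding has_field_derivative_iff by simp
  qed
qed

lemma dpsi_cont:
  assumes q: "q > 1"
  shows "continuous_on UNIV (dpsi q)"
proof -
  define k where "k = kk q"
  have k1: "k > 1" unfolding k_def using kk_gt1[OF q] .
  have dp1: "u \<le> k \<Longrightarrow> dpsi q u = q * AA q * ppow (q-1) (u-1)" for u unfolding dpsi_def k_def by simp
  have dp2: "u \<ge> k \<Longrightarrow> dpsi q u = cc q * (2*q-1) * u powr (2*q-2)" for u
  proof (cases "u = k")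
    case True
    then show ?thesis using dp1[of u] junction1[OF q] kk_gt1[OF q] unfolding k_def ppow_def by simp
  next
    case False
    assume "u \<ge> k" then show ?thesis using False unfolding dpsi_def k_def by simp
  qed
  have c1: "continuous_on {..k} (dpsi q)"
  proof -
    have "continuous_on {..k} (\<lambda>u. q * AA q * ppow (q-1) (u-1))"
      using q by (auto intro!: continuous_intros)
    then show ?thesis by (rule continuous_on_eq) (use dp1 in auto)
  qed
  have c2: "continuous_on {k..} (dpsi q)"
  proof -
    have "continuous_on {k..} (\<lambda>u. cc q * (2*q-1) * u powr (2*q-2))"
      using k1 by (auto intro!: continuous_intros)
    then show ?thesis by (rule continuous_on_eq) (use dp2 in auto)
  qed
  have "continuous_on ({..k} \<union> {k..}) (dpsi q)"
    by (rule continuous_on_closed_Un[OF _ _ c1 c2]) auto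
  moreover have "{..k} \<union> {k..} = (UNIV :: real set)" by auto
  ultimately show ?thesis by simp
qed

lemma psi_cont:
  assumes q: "q > 1"
  shows "continuous_on UNIV (psi q)"
  using psi_deriv[OF q] by (meson DERIV_continuous continuous_at_imp_continuous_on)


lemma cc_id:
  assumes q: "q > 1" and p: "p = q / (q - 1)"
  shows "(cc q * (2*q-1)) powr p = q * cc q"
proof -
  have q2: "2*q-1 > 0" using q by simp
  have p0: "p > 0" using q p by simp
  have pq: "p * (q - 1) = q" using q unfolding p by (simp add: field_simps)
  have lc: "ln (cc q) = (q-1) * ln q - q * ln (2*q-1)" unfolding cc_def using q q2 by (simp add: ln_div ln_powr)
  have "ln ((cc q * (2*q-1)) powr p) = p * (ln (cc q) + ln (2*q-1))"
    using cc_pos[OF q] q2 by (simp add: ln_powr ln_mult)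
  also have "\<dots> = (p * (q-1)) * (ln q - ln (2*q-1))" unfolding lc by (simp add: algebra_simps)
  also have "\<dots> = ln (q * cc q)" unfolding pq using cc_pos[OF q] q by (simp add: ln_mult lc algebra_simps)
  finally show ?thesis using cc_pos[OF q] q2 q by (subst ln_inj_iff[symmetric]) auto
qed

lemma psi_ode:
  assumes q: "q > 1" and p: "p = q / (q - 1)"
  shows "(1 - 2*q + q*u) * psi q u + (u - u^2) * dpsi q u + (1/p) * \<bar>dpsi q u\<bar> powr p = 0"
proof -
  have p0: "p > 0" using q p by simp
  have pq: "(q - 1) * p = q" using q unfolding p by (simp add: field_simps)
  have k1: "kk q > 1" using kk_gt1[OF q] .
  consider "u \<le> 1" | "1 < u" "u \<le> kk q" | "u > kk q" by linarith
  then show ?thesis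
  proof cases
    case 1
    then show ?thesis using psi_small[OF q] dpsi_small[OF q] p0 by simp
  next
    case 2
    define w where "w = u - 1"
    have w0: "w > 0" using 2 unfolding w_def by simp
    define W where "W = w powr q"
    define K where "K = kk q powr (q-1)"
    have psi: "psi q u = K / q * W" unfolding psi_def W_def K_def AA_def ppow_def w_def using 2 by simp
    have qA: "q * AA q = K" unfolding AA_def K_def using q by simp
    have dpsi: "dpsi q u = K * w powr (q-1)" unfolding dpsi_def ppow_def w_def using 2 qA by simp
    have ww: "w * w powr (q-1) = W" unfolding W_def using w0 by (simp add: powr_diff)
    have dpos: "dpsi q u \<ge> 0" unfolding dpsi K_def by simp
    have dp: "\<bar>dpsi q u\<bar> powr p = K * kk q * W"
    proof -
      have "\<bar>dpsi q u\<bar> powr p = K powr p * (w powr (q-1)) powr p"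
        using dpos unfolding dpsi K_def by (simp add: powr_mult)
      also have "K powr p = kk q powr q" unfolding K_def powr_powr pq ..
      also have "(w powr (q-1)) powr p = W" unfolding W_def powr_powr pq ..
      also have "kk q powr q = K * kk q" unfolding K_def using k1 by (simp add: powr_diff)
      finally show ?thesis .
    qed
    have kp: "kk q / p = (2*q-1)/q" unfolding kk_def p using q by (simp add: field_simps)
    have uw: "u - u^2 = - u * w" unfolding w_def by (simp add: power2_eq_square algebra_simps)
    have "(1 - 2*q + q*u) * psi q u + (u - u^2) * dpsi q u + (1/p) * \<bar>dpsi q u\<bar> powr p
        = (1 - 2*q + q*u) * (K / q * W) - u * K * (w * w powr (q-1)) + K * W * (kk q / p)"
      unfolding dp unfolding psi dpsi uw by (simp add: algebra_simps)
    also have "\<dots> = K * W * ((1 - 2*q + q*u) / q - u + (2*q-1)/q)" unfolding ww kp using q by (simp add: field_simps)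
    also have "(1 - 2*q + q*u) / q - u + (2*q-1)/q = 0" using q by (simp add: field_simps)
    finally show ?thesis by simp
  next
    case 3
    have u0: "u > 0" using 3 k1 by simp
    define U where "U = u powr (2*q-1)"
    define C where "C = cc q"
    have psi: "psi q u = C * U" unfolding psi_def C_def U_def using 3 by simp
    have dpsi: "dpsi q u = C * (2*q-1) * u powr (2*q-2)" unfolding dpsi_def C_def using 3 by simp
    have uu: "u * u powr (2*q-2) = U"
    proof -
      have "u powr (2*q-2) * u powr 1 = u powr (2*q-2+1)" by (rule powr_add[symmetric])
      moreover have "2*q-2+1 = 2*q-1" by simp
      ultimately show ?thesis unfolding U_def using u0 by (simp add: mult.commute)
    qed
    have dpos: "dpsi q u \<ge> 0" unfolding dpsi C_def using cc_pos[OF q] q by simp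
    have dp: "\<bar>dpsi q u\<bar> powr p = q * C * (U * u)"
    proof -
      have "\<bar>dpsi q u\<bar> powr p = (C * (2*q-1)) powr p * (u powr (2*q-2)) powr p"
        using dpos cc_pos[OF q] q unfolding dpsi C_def by (simp add: powr_mult)
      also have "(C * (2*q-1)) powr p = q * C" unfolding C_def by (rule cc_id[OF q p])
      also have "(u powr (2*q-2)) powr p = u powr (2*q)" unfolding powr_powr
      proof -
        have "(2*q-2) * p = 2*q" using pq by (simp add: algebra_simps)
        then show "u powr ((2*q-2) * p) = u powr (2*q)" by simp
      qed
      also have "u powr (2*q) = U * u"
      proof -
        have "u powr (2*q-1) * u powr 1 = u powr (2*q-1+1)" by (rule powr_add[symmetric])
        moreover have "2*q-1+1 = 2*q" by simp
        ultimately show ?thesis unfolding U_def using u0 by simp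
      qed
      finally show ?thesis .
    qed
    have "(1 - 2*q + q*u) * psi q u + (u - u^2) * dpsi q u + (1/p) * \<bar>dpsi q u\<bar> powr p
        = (1 - 2*q + q*u) * (C * U) + (1 - u) * C * (2*q-1) * (u * u powr (2*q-2)) + q * C * U * u / p"
      unfolding dp unfolding psi dpsi by (simp add: power2_eq_square algebra_simps)
    also have "\<dots> = C * U * ((1 - 2*q + q*u) + (1 - u) * (2*q-1) + u * (q / p))"
      unfolding uu by (simp add: algebra_simps)
    also have "q / p = q - 1" unfolding p using q by (simp add: field_simps)
    also have "(1 - 2*q + q*u) + (1 - u) * (2*q-1) + u * (q - 1) = 0" by (simp add: algebra_simps)
    finally show ?thesis by simp
  qed
qed


definition Pf :: "real \<Rightarrow> real \<Rightarrow> real \<Rightarrow> real \<Rightarrow> real \<Rightarrow> real" where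
  "Pf q T t x v = (1 - x) powr q * (T - t) powr (1 - 2*q) * psi q (v * (T - t) / (1 - x))"

definition Pt :: "real \<Rightarrow> real \<Rightarrow> real \<Rightarrow> real \<Rightarrow> real \<Rightarrow> real" where
  "Pt q T t x v = - ((1 - x) powr q * (T - t) powr (1 - 2*q) / (T - t)) *
      ((1 - 2*q) * psi q (v * (T - t) / (1 - x)) + (v * (T - t) / (1 - x)) * dpsi q (v * (T - t) / (1 - x)))"

definition Px :: "real \<Rightarrow> real \<Rightarrow> real \<Rightarrow> real \<Rightarrow> real \<Rightarrow> real" where
  "Px q T t x v = - ((1 - x) powr q * (T - t) powr (1 - 2*q) / (1 - x)) *
      (q * psi q (v * (T - t) / (1 - x)) - (v * (T - t) / (1 - x)) * dpsi q (v * (T - t) / (1 - x)))"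

definition Pv :: "real \<Rightarrow> real \<Rightarrow> real \<Rightarrow> real \<Rightarrow> real \<Rightarrow> real" where
  "Pv q T t x v = (1 - x) powr q * (T - t) powr (1 - 2*q) * (T - t) / (1 - x) * dpsi q (v * (T - t) / (1 - x))"

lemma psi_has_derivative:
  assumes q: "q > 1" and f: "(f has_derivative f') (at z within S)"
  shows "((\<lambda>z. psi q (f z)) has_derivative (\<lambda>h. dpsi q (f z) * f' h)) (at z within S)"
proof -
  have "(psi q has_derivative (\<lambda>h. dpsi q (f z) * h)) (at (f z))"
    using psi_deriv[OF q, of "f z"] unfolding has_field_derivative_def .
  from has_derivative_compose[OF f this] show ?thesis .
qed

lemma P_deriv_at:
  assumes q: "q > 1" and t: "t < T" and x: "x < 1"
  shows "((\<lambda>z. Pf q T (fst z) (fst (snd z)) (snd (snd z))) has_derivative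
           (\<lambda>h. Pt q T t x v * fst h + Px q T t x v * fst (snd h) + Pv q T t x v * snd (snd h))) (at (t, x, v))"
proof -
  define z0 where "z0 = (t, x, v)"
  define a where "a = 1 - x"
  define \<tau> where "\<tau> = T - t"
  have a0: "a > 0" and tau0: "\<tau> > 0" using t x unfolding a_def \<tau>_def by auto
  define u where "u = v * \<tau> / a"
  have h1: "((\<lambda>z. 1 - fst (snd z)) has_derivative (\<lambda>h. 0 - fst (snd h))) (at z0)"
    by (intro derivative_intros)
  have h2: "((\<lambda>z. T - fst z) has_derivative (\<lambda>h. 0 - fst h)) (at z0)"
    by (intro derivative_intros)
  have h3: "((\<lambda>z. snd (snd z)) has_derivative (\<lambda>h. snd (snd h))) (at z0)"
    by (intro derivative_intros)
  have hc: "((\<lambda>z. c) has_derivative (\<lambda>h. 0)) (at z0)" for c :: real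
    by (intro derivative_intros)
  have hA: "((\<lambda>z. (1 - fst (snd z)) powr q) has_derivative
              (\<lambda>h. (a powr q) * (0 * ln a + (0 - fst (snd h)) * q / a))) (at z0)"
    using has_derivative_powr[OF h1 hc, of q] a0 unfolding z0_def a_def by simp
  have hB: "((\<lambda>z. (T - fst z) powr (1 - 2*q)) has_derivative
              (\<lambda>h. (\<tau> powr (1 - 2*q)) * (0 * ln \<tau> + (0 - fst h) * (1 - 2*q) / \<tau>))) (at z0)"
    using has_derivative_powr[OF h2 hc, of "1 - 2*q"] tau0 unfolding z0_def \<tau>_def by simp
  have hU: "((\<lambda>z. snd (snd z) * (T - fst z) / (1 - fst (snd z))) has_derivative
              (\<lambda>h. ((snd (snd h) * \<tau> + v * (0 - fst h)) * a - v * \<tau> * (0 - fst (snd h))) / (a * a))) (at z0)"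
  proof -
    have m: "((\<lambda>z. snd (snd z) * (T - fst z)) has_derivative (\<lambda>h. v * (0 - fst h) + snd (snd h) * \<tau>)) (at z0)"
      using has_derivative_mult[OF h3 h2] unfolding z0_def \<tau>_def by simp
    show ?thesis
      apply (rule has_derivative_eq_rhs[OF has_derivative_divide[OF m h1]])
      unfolding z0_def fst_conv snd_conv a_def[symmetric] \<tau>_def[symmetric]
      using a0 by (auto simp: field_simps)
  qed
  have hP: "((\<lambda>z. psi q (snd (snd z) * (T - fst z) / (1 - fst (snd z)))) has_derivative
              (\<lambda>h. dpsi q u * (((snd (snd h) * \<tau> + v * (0 - fst h)) * a - v * \<tau> * (0 - fst (snd h))) / (a * a)))) (at z0)"
    using psi_has_derivative[OF q hU] unfolding z0_def u_def a_def \<tau>_def by simp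
  have v_eq: "v = u * a / \<tau>" unfolding u_def using a0 tau0 by simp
  note hAB = has_derivative_mult[OF hA hB]
  note hABP = has_derivative_mult[OF hAB hP]
  show ?thesis
    unfolding z0_def[symmetric] Pf_def
    apply (rule has_derivative_eq_rhs[OF hABP])
    apply (rule ext)
    unfolding Pt_def Px_def Pv_def z0_def fst_conv snd_conv a_def[symmetric] \<tau>_def[symmetric]
    unfolding u_def[symmetric]
    using a0 tau0 v_eq by (simp add: field_simps)
qed


lemma P_hjb:
  assumes q: "q > 1" and p: "p = q / (q - 1)" and t: "t < T" and x: "x < 1"
  shows "- Pt q T t x v - v * Px q T t x v + (1/p) * \<bar>Pv q T t x v\<bar> powr p = 0"
proof -
  define a where "a = 1 - x"
  define \<tau> where "\<tau> = T - t"
  have a0: "a > 0" and tau0: "\<tau> > 0" using t x unfolding a_def \<tau>_def by auto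
  define u where "u = v * \<tau> / a"
  define A where "A = a powr q"
  define B where "B = \<tau> powr (1 - 2*q)"
  have A0: "A > 0" and B0: "B > 0" unfolding A_def B_def using a0 tau0 by auto
  have v_eq: "v = u * a / \<tau>" unfolding u_def using a0 tau0 by simp
  have pq: "p * (q - 1) = q" using q unfolding p by (simp add: field_simps)
  have G: "(A * B * \<tau> / a) powr p = A * B / \<tau>"
  proof -
    have "ln ((A * B * \<tau> / a) powr p) = p * (q * ln a + (1 - 2*q) * ln \<tau> + ln \<tau> - ln a)"
      unfolding A_def B_def using a0 tau0 by (simp add: ln_powr ln_mult ln_div)
    also have "\<dots> = (p * (q - 1)) * (ln a - 2 * ln \<tau>)" by (simp add: algebra_simps)
    also have "\<dots> = ln (A * B / \<tau>)" unfolding pq A_def B_def using a0 tau0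
      by (simp add: ln_powr ln_mult ln_div algebra_simps)
    finally show ?thesis using A0 B0 a0 tau0 by (subst ln_inj_iff[symmetric]) auto
  qed
  have Pt: "Pt q T t x v = - (A * B / \<tau>) * ((1 - 2*q) * psi q u + u * dpsi q u)"
    unfolding Pt_def A_def B_def u_def a_def \<tau>_def ..
  have Px: "Px q T t x v = - (A * B / a) * (q * psi q u - u * dpsi q u)"
    unfolding Px_def A_def B_def u_def a_def \<tau>_def ..
  have Pv: "Pv q T t x v = (A * B * \<tau> / a) * dpsi q u"
    unfolding Pv_def A_def B_def u_def a_def \<tau>_def by simp
  have Pvp: "\<bar>Pv q T t x v\<bar> powr p = (A * B / \<tau>) * \<bar>dpsi q u\<bar> powr p"
  proof -
    have X0: "A * B * \<tau> / a \<ge> 0" using A0 B0 a0 tau0 by simp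
    have "\<bar>Pv q T t x v\<bar> = (A * B * \<tau> / a) * \<bar>dpsi q u\<bar>" unfolding Pv using A0 B0 a0 tau0 by (simp add: abs_mult)
    then have "\<bar>Pv q T t x v\<bar> powr p = (A * B * \<tau> / a) powr p * \<bar>dpsi q u\<bar> powr p"
      using powr_mult[of "A * B * \<tau> / a" "\<bar>dpsi q u\<bar>" p] by simp
    then show ?thesis unfolding G .
  qed
  have "- Pt q T t x v - v * Px q T t x v + (1/p) * \<bar>Pv q T t x v\<bar> powr p
      = (A * B / \<tau>) * ((1 - 2*q + q*u) * psi q u + (u - u^2) * dpsi q u + (1/p) * \<bar>dpsi q u\<bar> powr p)"
    unfolding Pvp unfolding Pt Px using a0 tau0 by (simp add: field_simps power2_eq_square v_eq)
  also have "\<dots> = 0" using psi_ode[OF q p] by simp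
  finally show ?thesis .
qed

lemma P_zero:
  assumes q: "q > 1" and v: "v \<le> 0" and t: "t \<le> T" and x: "x \<le> 1"
  shows "Pf q T t x v = 0"
proof -
  have "v * (T - t) \<le> 0" using v t by (simp add: mult_nonpos_nonneg)
  then have "v * (T - t) / (1 - x) \<le> 0" using x by (simp add: divide_nonpos_nonneg)
  then show ?thesis unfolding Pf_def using psi_small[OF q] by simp
qed

lemma VALPOS:
  assumes q: "q > 1" and t: "t \<le> T" and x: "-1 \<le> x" "x < 1" and v: "v \<ge> 0"
  shows "phi_tilde q T t x v = ereal (Pf q T t x v)"
proof -
  define a where "a = 1 - x"
  define \<tau> where "\<tau> = T - t"
  have a0: "a > 0" and tau0: "\<tau> \<ge> 0" using t x unfolding a_def \<tau>_def by auto
  define k where "k = (2*q-1)/(q-1)"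
  have kk: "kk q = k" unfolding kk_def k_def ..
  have k1: "k > 1" using kk_gt1[OF q] kk by simp
  define u where "u = v * \<tau> / a"
  have Pf: "Pf q T t x v = a powr q * \<tau> powr (1 - 2*q) * psi q u"
    unfolding Pf_def a_def \<tau>_def u_def ..
  have lk: "ln k = ln (2*q-1) - ln (q-1)" unfolding k_def using q by (simp add: ln_div)
  consider "v * \<tau> \<le> a" | "a < v * \<tau>" "v * \<tau> \<le> k * a" | "v * \<tau> > k * a" by linarith
  then show ?thesis
  proof cases
    case 1
    have "phi_tilde q T t x v = 0"
    proof (rule phi_case3[OF q x(1)])
      have "v * (T - t) \<ge> 0" using v t by simp
      then show "-1 - x \<le> v * (T - t)" using x by simp
      show "v * (T - t) \<le> 1 - x" using 1 unfolding a_def \<tau>_def .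
    qed (use x in simp)
    moreover have "u \<le> 1" unfolding u_def using 1 a0 by simp
    ultimately show ?thesis unfolding Pf using psi_small[OF q] by (simp add: zero_ereal_def)
  next
    case 2
    have tau1: "\<tau> > 0" using 2 a0 tau0 by (cases "\<tau> = 0") auto
    have u1: "u > 1" "u \<le> kk q" unfolding u_def kk using 2 a0 by (auto simp: field_simps)
    have ph: "phi_tilde q T t x v = ereal ((1/q) * ((2*q-1) powr (q-1) / (q-1) powr (q-1)) *
                  ((v + (x - 1) / (T - t)) powr q / (T - t) powr (q-1)))"
      by (rule phi_case4[OF q x(1)]) (use 2 x t in \<open>auto simp: a_def \<tau>_def k_def\<close>)
    define w where "w = v * \<tau> - a"
    have w0: "w > 0" using 2 unfolding w_def by simp
    have e1: "v + (x - 1) / (T - t) = w / \<tau>" unfolding w_def a_def \<tau>_def using tau1 unfolding \<tau>_def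
      by (simp add: field_simps)
    have e2: "u - 1 = w / a" unfolding u_def w_def using a0 by (simp add: field_simps)
    have psiu: "psi q u = (1/q) * k powr (q-1) * (w / a) powr q"
      unfolding psi_def AA_def ppow_def kk using u1 e2 kk by (simp add: max_def)
    have "ln ((1/q) * ((2*q-1) powr (q-1) / (q-1) powr (q-1)) * ((w / \<tau>) powr q / \<tau> powr (q-1)))
        = - ln q + (q-1) * (ln (2*q-1) - ln (q-1)) + q * (ln w - ln \<tau>) - (q-1) * ln \<tau>"
      using q w0 tau1 by (simp add: ln_mult ln_div ln_powr algebra_simps)
    also have "\<dots> = ln (a powr q * \<tau> powr (1 - 2*q) * ((1/q) * k powr (q-1) * (w / a) powr q))"
      using q w0 tau1 a0 k1 by (simp add: ln_mult ln_div ln_powr lk algebra_simps)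
    finally have "(1/q) * ((2*q-1) powr (q-1) / (q-1) powr (q-1)) * ((w / \<tau>) powr q / \<tau> powr (q-1))
        = a powr q * \<tau> powr (1 - 2*q) * ((1/q) * k powr (q-1) * (w / a) powr q)"
      using q w0 tau1 a0 k1 by (subst ln_inj_iff[symmetric]) auto
    then show ?thesis unfolding ph Pf psiu e1 unfolding \<tau>_def[symmetric] by simp
  next
    case 3
    have ka: "k * a > 0" using k1 a0 by simp
    have tau1: "\<tau> > 0" using 3 ka tau0 by (cases "\<tau> = 0") auto
    have v0: "v > 0" using 3 a0 k1 tau1 by (smt (verit) mult_nonpos_nonneg mult_pos_pos)
    have u1: "u > kk q" unfolding u_def kk using 3 a0 by (auto simp: field_simps)
    have ph: "phi_tilde q T t x v = ereal (q powr (q-1) / (2*q-1) powr q * (v powr (2*q-1) / (1 - x) powr (q-1)))"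
    proof (rule phi_case5[OF q x(1)])
      show "v * (T - t) \<ge> ((2*q-1)/(q-1)) * (1 - x)" using 3 unfolding a_def \<tau>_def k_def by simp
      show "((2*q-1)/(q-1)) * (1 - x) > 0" using ka unfolding a_def k_def .
    qed (use x t in auto)
    have psiu: "psi q u = cc q * u powr (2*q-1)" unfolding psi_def using u1 by simp
    have u0: "u > 0" using u1 k1 kk by simp
    have "ln (q powr (q-1) / (2*q-1) powr q * (v powr (2*q-1) / a powr (q-1)))
        = ln (cc q) + (2*q-1) * ln v - (q-1) * ln a"
      unfolding cc_def using q v0 a0 by (simp add: ln_mult ln_div ln_powr algebra_simps)
    also have "\<dots> = ln (a powr q * \<tau> powr (1 - 2*q) * (cc q * u powr (2*q-1)))"
      unfolding u_def using q v0 a0 tau1 cc_pos[OF q] by (simp add: ln_mult ln_div ln_powr algebra_simps)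
    finally have "q powr (q-1) / (2*q-1) powr q * (v powr (2*q-1) / a powr (q-1))
        = a powr q * \<tau> powr (1 - 2*q) * (cc q * u powr (2*q-1))"
      using q v0 a0 tau1 u0 cc_pos[OF q] by (subst ln_inj_iff[symmetric]) auto
    then show ?thesis unfolding ph Pf psiu a_def by simp
  qed
qed


lemma psi_cont_intro[continuous_intros]:
  "q > 1 \<Longrightarrow> continuous_on S f \<Longrightarrow> continuous_on S (\<lambda>z. psi q (f z))"
  using continuous_on_compose2[OF psi_cont[of q] _ subset_UNIV] by blast

lemma dpsi_cont_intro[continuous_intros]:
  "q > 1 \<Longrightarrow> continuous_on S f \<Longrightarrow> continuous_on S (\<lambda>z. dpsi q (f z))"
  using continuous_on_compose2[OF dpsi_cont[of q] _ subset_UNIV] by blast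

definition OpS :: "real \<Rightarrow> (real \<times> real \<times> real) set" where
  "OpS T = {z. fst z < T} \<inter> {z. fst (snd z) < 1}"

lemma open_OpS: "open (OpS T)"
  unfolding OpS_def
  by (intro open_Int open_Collect_less) (auto intro!: continuous_intros)

lemma P_conts:
  assumes q: "q > 1"
  shows "continuous_on (OpS T) (\<lambda>z. Pt q T (fst z) (fst (snd z)) (snd (snd z)))"
    and "continuous_on (OpS T) (\<lambda>z. Px q T (fst z) (fst (snd z)) (snd (snd z)))"
    and "continuous_on (OpS T) (\<lambda>z. Pv q T (fst z) (fst (snd z)) (snd (snd z)))"
  unfolding Pt_def Px_def Pv_def OpS_def using q
  by (auto intro!: continuous_intros)

lemma local_zero:
  assumes q: "q > 1" and t: "t \<le> T" and x: "\<bar>x\<bar> < 1" and h: "\<bar>v\<bar> * (T - t) \<le> 1 - \<bar>x\<bar>"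
  shows "Pf q T t x v = 0" "Pt q T t x v = 0" "Px q T t x v = 0" "Pv q T t x v = 0"
proof -
  have "v * (T - t) \<le> \<bar>v\<bar> * (T - t)" using t by (intro mult_right_mono) auto
  also have "\<dots> \<le> 1 - x" using h by auto
  moreover have "1 - x > 0" using x by simp
  ultimately have "v * (T - t) / (1 - x) \<le> 1" by (simp add: pos_divide_le_eq)
  then have "psi q (v * (T - t) / (1 - x)) = 0" "dpsi q (v * (T - t) / (1 - x)) = 0"
    using psi_small[OF q] dpsi_small[OF q] by auto
  then show "Pf q T t x v = 0" "Pt q T t x v = 0" "Px q T t x v = 0" "Pv q T t x v = 0"
    unfolding Pf_def Pt_def Px_def Pv_def by simp_all
qed

lemma near_T:
  assumes x0: "\<bar>x0\<bar> < 1"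
  shows "\<exists>d>0. \<forall>z::real\<times>real\<times>real. fst z \<le> T \<longrightarrow> dist z (T, x0, v0) < d \<longrightarrow>
            \<bar>fst (snd z)\<bar> < 1 \<and> \<bar>snd (snd z)\<bar> * (T - fst z) \<le> 1 - \<bar>fst (snd z)\<bar> \<and>
            \<bar>- snd (snd z)\<bar> * (T - fst z) \<le> 1 - \<bar>- fst (snd z)\<bar>"
proof -
  define m where "m = 1 - \<bar>x0\<bar>"
  have m0: "m > 0" and m1: "m \<le> 1" unfolding m_def using x0 by auto
  define d where "d = min (m/2) (m / (2 * (\<bar>v0\<bar> + 1)))"
  have d0: "d > 0" unfolding d_def using m0 by (simp add: add_pos_nonneg)
  have d1: "d \<le> m/2" "d \<le> m / (2 * (\<bar>v0\<bar> + 1))" unfolding d_def by (rule min.cobounded1, rule min.cobounded2)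
  have dv: "d * (\<bar>v0\<bar> + 1) \<le> m/2"
  proof -
    have pos: "2 * (\<bar>v0\<bar> + 1) > 0" by (simp add: add_pos_nonneg)
    have "d * (2 * (\<bar>v0\<bar> + 1)) \<le> m" using d1(2) pos by (simp add: le_divide_eq)
    then show ?thesis by (simp add: algebra_simps)
  qed
  show ?thesis
  proof (intro exI[of _ d] conjI allI impI d0)
    fix z :: "real \<times> real \<times> real"
    assume zT: "fst z \<le> T" and dz: "dist z (T, x0, v0) < d"
    obtain t x v where z: "z = (t, x, v)" by (cases z) auto
    have "dist t T \<le> dist z (T, x0, v0)" unfolding z using dist_fst_le[of "(t,x,v)" "(T,x0,v0)"] by simp
    then have dt: "T - t < d" using dz zT unfolding z by (simp add: dist_real_def)
    have "dist (x, v) (x0, v0) \<le> dist z (T, x0, v0)" unfolding z using dist_snd_le[of "(t,x,v)" "(T,x0,v0)"] by simp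
    then have dxv: "dist (x, v) (x0, v0) < d" using dz by simp
    have "dist x x0 < d" using dist_fst_le[of "(x,v)" "(x0,v0)"] dxv by simp
    then have dx: "\<bar>x - x0\<bar> < d" by (simp add: dist_real_def)
    have "dist v v0 < d" using dist_snd_le[of "(x,v)" "(x0,v0)"] dxv by simp
    then have dvv: "\<bar>v - v0\<bar> < d" by (simp add: dist_real_def)
    have tx: "\<bar>x\<bar> \<le> \<bar>x - x0\<bar> + \<bar>x0\<bar>" using abs_triangle_ineq[of "x - x0" x0] by simp
    have tv: "\<bar>v\<bar> \<le> \<bar>v - v0\<bar> + \<bar>v0\<bar>" using abs_triangle_ineq[of "v - v0" v0] by simp
    have xs: "\<bar>x\<bar> < 1 - m/2" using dx d1(1) tx m_def by linarith
    have vb: "\<bar>v\<bar> \<le> \<bar>v0\<bar> + 1" using dvv d1(1) m1 tv by linarith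
    have tau: "0 \<le> T - t" "T - t \<le> d" using zT dt unfolding z by auto
    have "\<bar>v\<bar> * (T - t) \<le> (\<bar>v0\<bar> + 1) * d"
      using vb tau by (intro mult_mono) auto
    also have "\<dots> \<le> m/2" using dv by (simp add: mult.commute)
    finally have "\<bar>v\<bar> * (T - t) \<le> 1 - \<bar>x\<bar>" using xs by linarith
    then show "\<bar>fst (snd z)\<bar> < 1" "\<bar>snd (snd z)\<bar> * (T - fst z) \<le> 1 - \<bar>fst (snd z)\<bar>"
      "\<bar>- snd (snd z)\<bar> * (T - fst z) \<le> 1 - \<bar>- fst (snd z)\<bar>"
      using xs m0 unfolding z by auto
  qed
qed


lemma N_deriv_at:
  assumes q: "q > 1" and t: "t < T" and x: "-1 < x"
  shows "((\<lambda>z. Pf q T (fst z) (- fst (snd z)) (- snd (snd z))) has_derivative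
           (\<lambda>h. Pt q T t (-x) (-v) * fst h - Px q T t (-x) (-v) * fst (snd h) - Pv q T t (-x) (-v) * snd (snd h))) (at (t, x, v))"
proof -
  have hL: "((\<lambda>z::real\<times>real\<times>real. (fst z, - fst (snd z), - snd (snd z))) has_derivative
             (\<lambda>h. (fst h, - fst (snd h), - snd (snd h)))) (at (t, x, v))"
    by (intro derivative_intros)
  have hP: "((\<lambda>z. Pf q T (fst z) (fst (snd z)) (snd (snd z))) has_derivative
           (\<lambda>h. Pt q T t (-x) (-v) * fst h + Px q T t (-x) (-v) * fst (snd h) + Pv q T t (-x) (-v) * snd (snd h)))
           (at ((\<lambda>z::real\<times>real\<times>real. (fst z, - fst (snd z), - snd (snd z))) (t, x, v)))"
    using P_deriv_at[OF q t, of "-x" "-v"] x by simp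
  show ?thesis
    using has_derivative_compose[OF hL hP] by simp
qed

theorem corollary2p8:
  fixes q T p :: real
  assumes hq: "q > 1" and hT: "T > 0" and hp: "p = q / (q - 1)"
  shows
   "(\<forall>t\<in>{0..T}. \<forall>x\<in>{-1..1}. \<forall>v.
      (v * (T - t) \<le> - ((2*q-1)/(q-1)) * (1 + x) \<and> - ((2*q-1)/(q-1)) * (1 + x) < 0 \<longrightarrow>
         phi_tilde q T t x v =
           ereal (q powr (q-1) / (2*q-1) powr q * (\<bar>v\<bar> powr (2*q-1) / (1 + x) powr (q-1)))) \<and>
      (- ((2*q-1)/(q-1)) * (1 + x) \<le> v * (T - t) \<and> v * (T - t) \<le> - (1 + x) \<longrightarrow>
         phi_tilde q T t x v =
           ereal ((1/q) * ((2*q-1) powr (q-1) / (q-1) powr (q-1)) *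
                  (\<bar>v + (1 + x) / (T - t)\<bar> powr q / (T - t) powr (q-1)))) \<and>
      (-1 - x \<le> v * (T - t) \<and> v * (T - t) \<le> 1 - x \<longrightarrow>
         phi_tilde q T t x v = 0) \<and>
      (1 - x \<le> v * (T - t) \<and> v * (T - t) \<le> ((2*q-1)/(q-1)) * (1 - x) \<longrightarrow>
         phi_tilde q T t x v =
           ereal ((1/q) * ((2*q-1) powr (q-1) / (q-1) powr (q-1)) *
                  ((v + (x - 1) / (T - t)) powr q / (T - t) powr (q-1)))) \<and>
      (v * (T - t) \<ge> ((2*q-1)/(q-1)) * (1 - x) \<and> ((2*q-1)/(q-1)) * (1 - x) > 0 \<longrightarrow>
         phi_tilde q T t x v =
           ereal (q powr (q-1) / (2*q-1) powr q * (v powr (2*q-1) / (1 - x) powr (q-1)))))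
    \<and>
    (let S = {0..T} \<times> {-1<..<1} \<times> (UNIV :: real set);
         \<Phi> = (\<lambda>z. real_of_ereal (phi_tilde q T (fst z) (fst (snd z)) (snd (snd z))))
     in (\<forall>z\<in>S. \<bar>phi_tilde q T (fst z) (fst (snd z)) (snd (snd z))\<bar> \<noteq> \<infinity>) \<and>
        (\<exists>Dt Dx Dv :: real \<times> real \<times> real \<Rightarrow> real.
           continuous_on S Dt \<and> continuous_on S Dx \<and> continuous_on S Dv \<and>
           (\<forall>z\<in>S. (\<Phi> has_derivative
                (\<lambda>h. Dt z * fst h + Dx z * fst (snd h) + Dv z * snd (snd h))) (at z within S))))
    \<and>
    (\<forall>D \<in> {{0..<T} \<times> {-1..<1} \<times> {0..}, {0..<T} \<times> {-1<..1} \<times> {..0}}.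
       let \<Phi> = (\<lambda>z. real_of_ereal (phi_tilde q T (fst z) (fst (snd z)) (snd (snd z))))
       in \<forall>z\<in>D. \<bar>phi_tilde q T (fst z) (fst (snd z)) (snd (snd z))\<bar> \<noteq> \<infinity> \<and>
            (\<exists>dt dx dv :: real.
               (\<Phi> has_derivative (\<lambda>h. dt * fst h + dx * fst (snd h) + dv * snd (snd h))) (at z within D) \<and>
               - dt - snd (snd z) * dx + (1/p) * \<bar>dv\<bar> powr p = 0))"
proof -
  have p1: "p > 1" using hq unfolding hp by (simp add: less_divide_eq)
  note P1 = part1[OF hq hT]
  define V where "V z = Pf q T (fst z) (fst (snd z)) (snd (snd z)) + Pf q T (fst z) (- fst (snd z)) (- snd (snd z))" for z :: "real \<times> real \<times> real"
  have VS: "phi_tilde q T (fst z) (fst (snd z)) (snd (snd z)) = ereal (V z)"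
    if "z \<in> {0..T} \<times> {-1<..<1} \<times> (UNIV :: real set)" for z
  proof -
    obtain t x v where z: "z = (t, x, v)" by (cases z) auto
    from that have t: "0 \<le> t" "t \<le> T" and x: "-1 < x" "x < 1" by (auto simp: z)
    show ?thesis
    proof (cases "v \<ge> 0")
      case True
      have "phi_tilde q T t x v = ereal (Pf q T t x v)" by (rule VALPOS[OF hq t(2)]) (use x True in auto)
      moreover have "Pf q T t (-x) (-v) = 0" by (rule P_zero[OF hq]) (use True t x in auto)
      ultimately show ?thesis unfolding z V_def by simp
    next
      case False
      have "phi_tilde q T t x v = phi_tilde q T t (-x) (-v)" by (rule phi_sym)
      also have "\<dots> = ereal (Pf q T t (-x) (-v))" by (rule VALPOS[OF hq t(2)]) (use x False in auto)
      finally have "phi_tilde q T t x v = ereal (Pf q T t (-x) (-v))" .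
      moreover have "Pf q T t x v = 0" by (rule P_zero[OF hq]) (use False t x in auto)
      ultimately show ?thesis unfolding z V_def by simp
    qed
  qed
  define S where "S = {0..T} \<times> {-1<..<(1::real)} \<times> (UNIV :: real set)"
  define \<Phi> where "\<Phi> = (\<lambda>z. real_of_ereal (phi_tilde q T (fst z) (fst (snd z)) (snd (snd z))))"
  have \<Phi>V: "\<Phi> z = V z" if "z \<in> S" for z using VS[of z] that unfolding \<Phi>_def S_def by simp
  define Pt' where "Pt' z = Pt q T (fst z) (fst (snd z)) (snd (snd z))" for z :: "real \<times> real \<times> real"
  define Px' where "Px' z = Px q T (fst z) (fst (snd z)) (snd (snd z))" for z :: "real \<times> real \<times> real"
  define Pv' where "Pv' z = Pv q T (fst z) (fst (snd z)) (snd (snd z))" for z :: "real \<times> real \<times> real"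
  define L where "L z = (fst z, - fst (snd z), - snd (snd z))" for z :: "real \<times> real \<times> real"
  define Dt where "Dt z = Pt' z + Pt' (L z)" for z
  define Dx where "Dx z = Px' z - Px' (L z)" for z
  define Dv where "Dv z = Pv' z - Pv' (L z)" for z
  have Lc: "continuous (at z within S) L" for z unfolding L_def by (intro continuous_intros)
  have cP: "isCont Pt' z" "isCont Px' z" "isCont Pv' z" if "z \<in> OpS T" for z
    using P_conts[OF hq, of T] open_OpS[of T] that unfolding Pt'_def Px'_def Pv'_def
    by (auto simp: continuous_on_eq_continuous_at)
  have nearT: "\<exists>d>0. \<forall>z'\<in>S. dist z' z < d \<longrightarrow> V z' = 0 \<and> Dt z' = 0 \<and> Dx z' = 0 \<and> Dv z' = 0"
    if z: "z \<in> S" "fst z = T" for z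
  proof -
    obtain x0 v0 where z0: "z = (T, x0, v0)" using z by (cases z) auto
    have x0: "\<bar>x0\<bar> < 1" using z unfolding z0 S_def by auto
    obtain d where d: "d > 0" and hd: "\<And>z'::real\<times>real\<times>real. fst z' \<le> T \<Longrightarrow> dist z' (T, x0, v0) < d \<Longrightarrow>
            \<bar>fst (snd z')\<bar> < 1 \<and> \<bar>snd (snd z')\<bar> * (T - fst z') \<le> 1 - \<bar>fst (snd z')\<bar> \<and>
            \<bar>- snd (snd z')\<bar> * (T - fst z') \<le> 1 - \<bar>- fst (snd z')\<bar>"
      using near_T[OF x0, of T v0] by blast
    show ?thesis
    proof (intro exI[of _ d] conjI d ballI impI)
      fix z' assume z'S: "z' \<in> S" and dz: "dist z' z < d"
      obtain t x v where z': "z' = (t, x, v)" by (cases z') auto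
      have tT: "t \<le> T" using z'S unfolding z' S_def by auto
      have H: "\<bar>x\<bar> < 1" "\<bar>v\<bar> * (T - t) \<le> 1 - \<bar>x\<bar>" "\<bar>- v\<bar> * (T - t) \<le> 1 - \<bar>- x\<bar>"
        using hd[of z'] tT dz unfolding z' z0 by auto
      have H2: "\<bar>- x\<bar> < 1" using H(1) by simp
      note Z1 = local_zero[OF hq tT H(1) H(2)]
      note Z2 = local_zero[OF hq tT H2 H(3)]
      show "V z' = 0" "Dt z' = 0" "Dx z' = 0" "Dv z' = 0"
        unfolding V_def Dt_def Dx_def Dv_def Pt'_def Px'_def Pv'_def L_def z' using Z1 Z2 by simp_all
    qed
  qed
  have P2: "(\<forall>z\<in>S. \<bar>phi_tilde q T (fst z) (fst (snd z)) (snd (snd z))\<bar> \<noteq> \<infinity>) \<and>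
        (\<exists>Dt Dx Dv :: real \<times> real \<times> real \<Rightarrow> real.
           continuous_on S Dt \<and> continuous_on S Dx \<and> continuous_on S Dv \<and>
           (\<forall>z\<in>S. (\<Phi> has_derivative
                (\<lambda>h. Dt z * fst h + Dx z * fst (snd h) + Dv z * snd (snd h))) (at z within S)))"
  proof (rule conjI)
    show "\<forall>z\<in>S. \<bar>phi_tilde q T (fst z) (fst (snd z)) (snd (snd z))\<bar> \<noteq> \<infinity>"
      using VS unfolding S_def by simp
  next
    show "\<exists>Dt Dx Dv :: real \<times> real \<times> real \<Rightarrow> real.
           continuous_on S Dt \<and> continuous_on S Dx \<and> continuous_on S Dv \<and>
           (\<forall>z\<in>S. (\<Phi> has_derivative
                (\<lambda>h. Dt z * fst h + Dx z * fst (snd h) + Dv z * snd (snd h))) (at z within S))"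
  proof (rule exI[of _ Dt], rule exI[of _ Dx], rule exI[of _ Dv], intro conjI ballI)
    have cont: "continuous (at z within S) D" if D: "D = Dt \<or> D = Dx \<or> D = Dv" and zS: "z \<in> S" for z D
    proof (cases "fst z = T")
      case True
      obtain d where d: "d > 0" and hd: "\<forall>z'\<in>S. dist z' z < d \<longrightarrow> V z' = 0 \<and> Dt z' = 0 \<and> Dx z' = 0 \<and> Dv z' = 0"
        using nearT[OF zS True] by blast
      have Dz: "D z = 0" using hd zS d D by auto
      have "eventually (\<lambda>z'. D z' = D z) (at z within S)"
        unfolding eventually_at using d hd D Dz by (intro exI[of _ d]) auto
      then show ?thesis unfolding continuous_within by (rule tendsto_eventually)
    next
      case False
      obtain t x v where z: "z = (t, x, v)" by (cases z) auto
      have tT: "t < T" and x: "-1 < x" "x < 1" using zS False unfolding z S_def by auto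
      have zO: "z \<in> OpS T" and LzO: "L z \<in> OpS T" unfolding OpS_def L_def z using tT x by auto
      have c1: "continuous (at z within S) Pt'" "continuous (at z within S) Px'" "continuous (at z within S) Pv'"
        using cP[OF zO] by (auto intro: continuous_at_imp_continuous_at_within)
      have c2: "continuous (at z within S) (\<lambda>z. Pt' (L z))" "continuous (at z within S) (\<lambda>z. Px' (L z))"
               "continuous (at z within S) (\<lambda>z. Pv' (L z))"
        using continuous_within_compose3[OF cP(1)[OF LzO] Lc] continuous_within_compose3[OF cP(2)[OF LzO] Lc]
              continuous_within_compose3[OF cP(3)[OF LzO] Lc] by auto
      show ?thesis using D c1 c2 unfolding Dt_def Dx_def Dv_def
        by (auto intro!: continuous_intros)
    qed
    show "continuous_on S Dt" "continuous_on S Dx" "continuous_on S Dv"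
      using cont by (auto simp: continuous_on_eq_continuous_within)
  next
    fix z assume zS: "z \<in> S"
    show "(\<Phi> has_derivative (\<lambda>h. Dt z * fst h + Dx z * fst (snd h) + Dv z * snd (snd h))) (at z within S)"
    proof (cases "fst z = T")
      case True
      obtain d where d: "d > 0" and hd: "\<forall>z'\<in>S. dist z' z < d \<longrightarrow> V z' = 0 \<and> Dt z' = 0 \<and> Dx z' = 0 \<and> Dv z' = 0"
        using nearT[OF zS True] by blast
      have Dz: "Dt z = 0" "Dx z = 0" "Dv z = 0" using hd zS d by auto
      have "((\<lambda>z. 0::real) has_derivative (\<lambda>h. 0)) (at z within S)" by (rule has_derivative_const)
      then have "(\<Phi> has_derivative (\<lambda>h. 0)) (at z within S)"
      proof (rule has_derivative_transform_within[OF _ d zS])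
        fix z' assume "z' \<in> S" "dist z' z < d"
        then show "0 = \<Phi> z'" using hd \<Phi>V by auto
      qed
      then show ?thesis using Dz by simp
    next
      case False
      obtain t x v where z: "z = (t, x, v)" by (cases z) auto
      have tT: "t < T" and x: "-1 < x" "x < 1" using zS False unfolding z S_def by auto
      have hV: "(V has_derivative (\<lambda>h. Dt z * fst h + Dx z * fst (snd h) + Dv z * snd (snd h))) (at z)"
      proof -
        have "(V has_derivative (\<lambda>h. (Pt q T t x v * fst h + Px q T t x v * fst (snd h) + Pv q T t x v * snd (snd h)) +
             (Pt q T t (-x) (-v) * fst h - Px q T t (-x) (-v) * fst (snd h) - Pv q T t (-x) (-v) * snd (snd h)))) (at z)"
          unfolding V_def z using has_derivative_add[OF P_deriv_at[OF hq tT x(2)] N_deriv_at[OF hq tT x(1)]] .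
        then show ?thesis
          by (rule has_derivative_eq_rhs)
             (simp add: Dt_def Dx_def Dv_def Pt'_def Px'_def Pv'_def L_def z algebra_simps)
      qed
      show ?thesis
        by (rule has_derivative_transform_within[OF has_derivative_at_withinI[OF hV] zero_less_one zS])
           (use \<Phi>V in auto)
    qed
  qed
  qed
  have P3: "\<forall>D \<in> {{0..<T} \<times> {-1..<1} \<times> {0..}, {0..<T} \<times> {-1<..1} \<times> {..0}}.
       let \<Phi> = (\<lambda>z. real_of_ereal (phi_tilde q T (fst z) (fst (snd z)) (snd (snd z))))
       in \<forall>z\<in>D. \<bar>phi_tilde q T (fst z) (fst (snd z)) (snd (snd z))\<bar> \<noteq> \<infinity> \<and>
            (\<exists>dt dx dv :: real.
               (\<Phi> has_derivative (\<lambda>h. dt * fst h + dx * fst (snd h) + dv * snd (snd h))) (at z within D) \<and>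
               - dt - snd (snd z) * dx + (1/p) * \<bar>dv\<bar> powr p = 0)"
  proof (intro ballI, unfold Let_def \<Phi>_def[symmetric], intro ballI)
    fix D :: "(real \<times> real \<times> real) set" and z :: "real \<times> real \<times> real"
    assume D: "D \<in> {{0..<T} \<times> {-1..<1} \<times> {0..}, {0..<T} \<times> {-1<..1} \<times> {..0}}" and zD: "z \<in> D"
    obtain t x v where z: "z = (t, x, v)" by (cases z) auto
    from D consider "D = {0..<T} \<times> {-1..<1} \<times> {0..}" | "D = {0..<T} \<times> {-1<..1} \<times> {..0}" by blast
    then show "\<bar>phi_tilde q T (fst z) (fst (snd z)) (snd (snd z))\<bar> \<noteq> \<infinity> \<and>
            (\<exists>dt dx dv :: real.
               (\<Phi> has_derivative (\<lambda>h. dt * fst h + dx * fst (snd h) + dv * snd (snd h))) (at z within D) \<and>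
               - dt - snd (snd z) * dx + (1/p) * \<bar>dv\<bar> powr p = 0)"
    proof cases
      case 1
      have tT: "t < T" and x: "-1 \<le> x" "x < 1" and v: "v \<ge> 0" using zD unfolding 1 z by auto
      have val: "phi_tilde q T t' x' v' = ereal (Pf q T t' x' v')" if "(t', x', v') \<in> D" for t' x' v'
        using that unfolding 1 by (intro VALPOS[OF hq]) auto
      have hd: "(\<Phi> has_derivative (\<lambda>h. Pt q T t x v * fst h + Px q T t x v * fst (snd h) + Pv q T t x v * snd (snd h))) (at (t, x, v) within D)"
      proof (rule has_derivative_transform_within[OF has_derivative_at_withinI[OF P_deriv_at[OF hq tT x(2)]] zero_less_one])
        show "(t, x, v) \<in> D" using zD z by simp
        fix z' assume "z' \<in> D"
        then show "Pf q T (fst z') (fst (snd z')) (snd (snd z')) = \<Phi> z'"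
          using val[of "fst z'" "fst (snd z')" "snd (snd z')"] unfolding \<Phi>_def by simp
      qed
      show ?thesis
      proof (intro conjI exI)
        show "\<bar>phi_tilde q T (fst z) (fst (snd z)) (snd (snd z))\<bar> \<noteq> \<infinity>" using val[of t x v] zD z by simp
        show "(\<Phi> has_derivative (\<lambda>h. Pt q T t x v * fst h + Px q T t x v * fst (snd h) + Pv q T t x v * snd (snd h))) (at z within D)"
          using hd z by simp
        show "- Pt q T t x v - snd (snd z) * Px q T t x v + (1/p) * \<bar>Pv q T t x v\<bar> powr p = 0"
          using P_hjb[OF hq hp tT x(2)] z by simp
      qed
    next
      case 2
      have tT: "t < T" and x: "-1 < x" "x \<le> 1" and v: "v \<le> 0" using zD unfolding 2 z by auto
      have val: "phi_tilde q T t' x' v' = ereal (Pf q T t' (-x') (-v'))" if "(t', x', v') \<in> D" for t' x' v'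
      proof -
        have "phi_tilde q T t' x' v' = phi_tilde q T t' (-x') (-v')" by (rule phi_sym)
        also have "\<dots> = ereal (Pf q T t' (-x') (-v'))" using that unfolding 2 by (intro VALPOS[OF hq]) auto
        finally show ?thesis .
      qed
      have hd: "(\<Phi> has_derivative (\<lambda>h. Pt q T t (-x) (-v) * fst h - Px q T t (-x) (-v) * fst (snd h) - Pv q T t (-x) (-v) * snd (snd h))) (at (t, x, v) within D)"
      proof (rule has_derivative_transform_within[OF has_derivative_at_withinI[OF N_deriv_at[OF hq tT x(1)]] zero_less_one])
        show "(t, x, v) \<in> D" using zD z by simp
        fix z' assume "z' \<in> D"
        then show "Pf q T (fst z') (- fst (snd z')) (- snd (snd z')) = \<Phi> z'"
          using val[of "fst z'" "fst (snd z')" "snd (snd z')"] unfolding \<Phi>_def by simp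
      qed
      show ?thesis
      proof (intro conjI exI)
        show "\<bar>phi_tilde q T (fst z) (fst (snd z)) (snd (snd z))\<bar> \<noteq> \<infinity>" using val[of t x v] zD z by simp
        show "(\<Phi> has_derivative (\<lambda>h. Pt q T t (-x) (-v) * fst h + (- Px q T t (-x) (-v)) * fst (snd h) + (- Pv q T t (-x) (-v)) * snd (snd h))) (at z within D)"
          using hd z by (simp add: algebra_simps)
        have "-x < 1" using x by simp
        show "- Pt q T t (-x) (-v) - snd (snd z) * (- Px q T t (-x) (-v)) + (1/p) * \<bar>- Pv q T t (-x) (-v)\<bar> powr p = 0"
          using P_hjb[OF hq hp tT \<open>-x < 1\<close>, of "-v"] z by simp
      qed
    qed
  qed
  show ?thesis
    using P1 P2 P3 unfolding Let_def S_def \<Phi>_def by blast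
qed


end
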